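(* Let $T\subset\mathbb{R}^d$ ($d\in\{2,3\}$) be a nondegenerate simplex, $k\ge1$. For any $\sigma\in H^1(T,\mathbb{R}^{d\times d})$, $$\mathcal{M}^{-1}(I_T\sigma)=I_{\hat T}(\mathcal{M}^{-1}(\sigma)).$$
   Context: $\mathbb{D}$ = trace-free $d\times d$ matrices. For a facet with unit normal $n$, $\tau_{nt}=\tau n-(n^T\tau n)n$ (identified with an $\mathbb{R}^{d-1}$-valued function). For a simplex $K$, $\Sigma_k(K)=\{\tau\in\mathbb{P}^k(K,\mathbb{D}):\tau_{nt}|_F\in\mathbb{P}^{k-1}(F,\mathbb{R}^{d-1})\ \forall\text{ facets }F\subset\partial K\}$ and $\mathcal{B}_k(K)=\{\tau\in\Sigma_k(K):\tau_{nt}=0\text{ on }\partial K\}$. $\hat T$ is the unit reference simplex, $\phi_T:\hat T\to T$ an affine bijection with Jacobian $F_T$ (for $\hat T$ itself the map is the identity). The mapping $\mathcal{M}$ sends $\hat\sigma$ on $\hat T$ to $\mathcal{M}(\hat\sigma)=\frac{1}{\det F_T}F_T^{-T}(\hat\sigma\circ\phi_T^{-1})F_T^T$ on $T$, so $\mathcal{M}^{-1}(\sigma)=\det(F_T)\,F_T^T(\sigma\circ\phi_T)F_T^{-T}$. Degrees of freedom on a simplex $K$ with affine map $\phi_K$, Jacobian $F_K$: for each facet $F$ of $K$, $\tau\mapsto\int_F\tau_{nt}\cdot r\,ds$ for $r\in\mathbb{P}^{k-1}(F,\mathbb{R}^{d-1})$; and $\tau\mapsto\int_K\tau:F_K(\hat\eta\circ\phi_K^{-1})F_K^{-1}\,dx$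 for $\hat\eta\in\mathcal{B}_k(\hat T)$; denote this set $\Phi(K)$. These are unisolvent on $\Sigma_k(K)$. The local interpolant $I_K\sigma\in\Sigma_k(K)$ of $\sigma\in H^1(K,\mathbb{R}^{d\times d})$ is defined by $\phi(\sigma-I_K\sigma)=0$ for all $\phi\in\Phi(K)$. *)

theory Defs
  imports "HOL-Analysis.Analysis"
begin

type_synonym 'n mat = "real^'n^'n"

definition poly_deg :: "nat \<Rightarrow> (real^'n \<Rightarrow> real) \<Rightarrow> bool" where
  "poly_deg k p \<longleftrightarrow> (\<exists>c :: ('n \<Rightarrow> nat) \<Rightarrow> real.
      p = (\<lambda>x. \<Sum>\<alpha>\<in>{\<alpha>::'n \<Rightarrow> nat. sum \<alpha> UNIV \<le> k}. c \<alpha> * (\<Prod>i\<in>UNIV. (x$i) ^ \<alpha> i)))"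

definition poly_vec :: "nat \<Rightarrow> (real^'n \<Rightarrow> real^'n) \<Rightarrow> bool" where
  "poly_vec k q \<longleftrightarrow> (\<forall>i. poly_deg k (\<lambda>x. q x $ i))"

definition poly_mat :: "nat \<Rightarrow> (real^'n \<Rightarrow> 'n mat) \<Rightarrow> bool" where
  "poly_mat k \<tau> \<longleftrightarrow> (\<forall>i j. poly_deg k (\<lambda>x. \<tau> x $ i $ j))"

definition ref_simplex :: "(real^'n) set" where
  "ref_simplex = {x. (\<forall>i. 0 \<le> x$i) \<and> (\<Sum>i\<in>UNIV. x$i) \<le> 1}"

definition facet_normal :: "(real^'n) set \<Rightarrow> real^'n" where
  "facet_normal F = (SOME n. norm n = 1 \<and> (\<forall>x\<in>F. \<forall>y\<in>F. n \<bullet> (x - y) = 0))"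

text \<open>Normal-tangential component tau n - (n^T tau n) n (kept as a vector in R^d
  orthogonal to n, i.e. in the tangent space of the facet).\<close>
definition nt :: "(real^'n) set \<Rightarrow> 'n mat \<Rightarrow> real^'n" where
  "nt F A = (let n = facet_normal F in A *v n - scaleR (n \<bullet> (A *v n)) n)"

text \<open>Surface integral over a flat facet F, realised exactly as a volume integral over the
  unit-height prism F + [0,1] n of the function composed with the orthogonal projection onto
  the affine hull of F (Fubini: the volume element of the prism is ds dt).\<close>
definition facet_prism :: "(real^'n) set \<Rightarrow> (real^'n) set" where
  "facet_prism F = {y + scaleR t (facet_normal F) | y t. y \<in> F \<and> t \<in> {0..1}}"

definition facet_proj :: "(real^'n) set \<Rightarrow> real^'n \<Rightarrow> real^'n" where
  "facet_proj F x = (let n = facet_normal F; c = (SOME c. c \<in> F) in x - scaleR ((x - c) \<bullet> n) n)"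

definition facet_integral :: "(real^'n) set \<Rightarrow> (real^'n \<Rightarrow> real) \<Rightarrow> real" where
  "facet_integral F g = integral (facet_prism F) (\<lambda>x. g (facet_proj F x))"

definition Sigma :: "nat \<Rightarrow> (real^'n) set \<Rightarrow> (real^'n \<Rightarrow> 'n mat) set" where
  "Sigma k K = {\<tau>. poly_mat k \<tau> \<and> (\<forall>x. trace (\<tau> x) = 0) \<and>
     (\<forall>F. F facet_of K \<longrightarrow> (\<exists>q. poly_vec (k - 1) q \<and> (\<forall>x\<in>F. nt F (\<tau> x) = q x)))}"

definition Bubble :: "nat \<Rightarrow> (real^'n) set \<Rightarrow> (real^'n \<Rightarrow> 'n mat) set" where
  "Bubble k K = {\<tau>\<in>Sigma k K. \<forall>F. F facet_of K \<longrightarrow> (\<forall>x\<in>F. nt F (\<tau> x) = 0)}"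

definition frob :: "('n::finite) mat \<Rightarrow> 'n mat \<Rightarrow> real" where
  "frob A B = (\<Sum>i\<in>UNIV. \<Sum>j\<in>UNIV. A$i$j * B$i$j)"

text \<open>All degrees of freedom Phi(K) vanish on rho; K has affine map x \<mapsto> FK x + b.\<close>
definition dofs_vanish :: "nat \<Rightarrow> (real^'n) set \<Rightarrow> 'n mat \<Rightarrow> real^'n \<Rightarrow> (real^'n \<Rightarrow> 'n mat) \<Rightarrow> bool" where
  "dofs_vanish k K FK b \<rho> \<longleftrightarrow>
     (\<forall>F r. F facet_of K \<longrightarrow> poly_vec (k - 1) r \<longrightarrow>
        facet_integral F (\<lambda>x. nt F (\<rho> x) \<bullet> r x) = 0) \<and>
     (\<forall>\<eta>\<in>Bubble k (ref_simplex :: (real^'n) set).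
        integral K (\<lambda>x. frob (\<rho> x) (FK ** \<eta> (matrix_inv FK *v (x - b)) ** matrix_inv FK)) = 0)"

text \<open>Functions for which all degrees of freedom are defined (replaces H^1).\<close>
definition admissible :: "(real^'n) set \<Rightarrow> (real^'n \<Rightarrow> 'n mat) \<Rightarrow> bool" where
  "admissible K \<sigma> \<longleftrightarrow> (\<forall>i j. (\<lambda>x. \<sigma> x $ i $ j) absolutely_integrable_on K) \<and>
     (\<forall>F. F facet_of K \<longrightarrow> (\<forall>i j. (\<lambda>x. \<sigma> (facet_proj F x) $ i $ j) absolutely_integrable_on facet_prism F))"

definition interp :: "nat \<Rightarrow> (real^'n) set \<Rightarrow> 'n mat \<Rightarrow> real^'n \<Rightarrow> (real^'n \<Rightarrow> 'n mat) \<Rightarrow> (real^'n \<Rightarrow> 'n mat)" where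
  "interp k K FK b \<sigma> = (THE \<tau>. \<tau> \<in> Sigma k K \<and> dofs_vanish k K FK b (\<lambda>x. \<sigma> x - \<tau> x))"

definition aff_map :: "'n mat \<Rightarrow> real^'n \<Rightarrow> real^'n \<Rightarrow> real^'n" where
  "aff_map F b x = F *v x + b"

definition Minv :: "'n mat \<Rightarrow> real^'n \<Rightarrow> (real^'n \<Rightarrow> 'n mat) \<Rightarrow> (real^'n \<Rightarrow> 'n mat)" where
  "Minv F b \<sigma> = (\<lambda>x. scaleR (det F) (transpose F ** \<sigma> (aff_map F b x) ** matrix_inv (transpose F)))"

end

theory Submission
  imports Defs
begin

definition permv :: "('m \<Rightarrow> 'n) \<Rightarrow> real^'n \<Rightarrow> real^'m" where
  "permv p x = (\<chi> j. x $ p j)"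

lemma permv_nth[simp]: "permv p x $ j = x $ p j"
  by (simp add: permv_def)

lemma permv_inv1: "bij p \<Longrightarrow> permv (inv p) (permv p x) = x"
  by (simp add: vec_eq_iff bij_def surj_f_inv_f)

lemma permv_inv2: "bij p \<Longrightarrow> permv p (permv (inv p) y) = y"
  by (simp add: vec_eq_iff bij_def inv_f_f)

lemma linear_permv: "linear (permv p)"
  by (auto simp: linear_iff vec_eq_iff)

lemma bl_permv: "bounded_linear (permv p)"
  using linear_permv linear_conv_bounded_linear by blast

lemma norm_permv: "bij p \<Longrightarrow> norm (permv p x) = norm x"
proof -
  assume p: "bij p"
  have "(\<Sum>j\<in>UNIV. (norm (x $ p j))\<^sup>2) = (\<Sum>i\<in>UNIV. (norm (x $ i))\<^sup>2)"
    using sum.reindex_bij_betw[of p UNIV UNIV "\<lambda>i. (norm (x $ i))\<^sup>2"] p by simp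
  then show ?thesis by (simp add: norm_vec_def L2_set_def)
qed

lemma permv_cbox: "bij p \<Longrightarrow> permv p ` cbox a b = cbox (permv p a) (permv p b)"
proof -
  assume p: "bij p"
  have surjp: "\<And>i. p (inv p i) = i" using p by (simp add: bij_def surj_f_inv_f)
  show ?thesis
  proof
    show "permv p ` cbox a b \<subseteq> cbox (permv p a) (permv p b)"
      by (auto simp: mem_box_cart)
    show "cbox (permv p a) (permv p b) \<subseteq> permv p ` cbox a b"
    proof
      fix y assume y: "y \<in> cbox (permv p a) (permv p b)"
      have "permv (inv p) y \<in> cbox a b"
        using y by (auto simp: mem_box_cart) (metis surjp)+
      moreover have "y = permv p (permv (inv p) y)" using permv_inv2[OF p] by simp
      ultimately show "y \<in> permv p ` cbox a b" by blast
    qed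
  qed
qed

lemma content_permv: "bij p \<Longrightarrow> Henstock_Kurzweil_Integration.content (cbox (permv p a) (permv p b)) = Henstock_Kurzweil_Integration.content (cbox a b)"
proof -
  assume p: "bij p"
  have surjp: "\<And>i. p (inv p i) = i" using p by (simp add: bij_def surj_f_inv_f)
  have e: "cbox (permv p a) (permv p b) = {} \<longleftrightarrow> cbox a b = {}"
    by (metis image_is_empty permv_cbox[OF p])
  have "(\<Prod>j\<in>UNIV. b $ p j - a $ p j) = (\<Prod>i\<in>UNIV. b $ i - a $ i)"
    using prod.reindex_bij_betw[of p UNIV UNIV "\<lambda>i. b $ i - a $ i"] p by simp
  then show ?thesis using e by (simp add: content_cbox_if_cart)
qed

lemma permv_has_integral_cbox:
  fixes f :: "real^'n \<Rightarrow> 'b::banach" and p :: "'m::finite \<Rightarrow> 'n::finite"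
  assumes p: "bij p" and f: "(f has_integral i) (cbox a b)"
  shows "((\<lambda>y. f (permv (inv p) y)) has_integral i) (cbox (permv p a) (permv p b))"
proof -
  have pi: "bij (inv p)" using p by (simp add: bij_imp_bij_inv)
  have ii: "inv (inv p) = p" using p by (simp add: inv_inv_eq)
  have "((\<lambda>y. f (permv (inv p) y)) has_integral (1/1) *\<^sub>R i) (permv p ` cbox a b)"
  proof (rule has_integral_twiddle[where g="permv (inv p)" and h="permv p"])
    show "permv p (permv (inv p) x) = x" for x using permv_inv2[OF p] .
    show "permv (inv p) (permv p x) = x" for x using permv_inv1[OF p] .
    show "continuous (at x) (permv (inv p))" for x
      by (rule linear_continuous_at) (simp add: bl_permv)
    show "\<exists>w z. permv (inv p) ` cbox u v = cbox w z" for u v using permv_cbox[OF pi] by blast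
    show "\<exists>w z. permv p ` cbox u v = cbox w z" for u v using permv_cbox[OF p] by blast
    show "Henstock_Kurzweil_Integration.content (permv (inv p) ` cbox u v) = 1 * Henstock_Kurzweil_Integration.content (cbox u v)" for u v
      using permv_cbox[OF pi] content_permv[OF pi] by simp
  qed (simp_all add: f)
  then show ?thesis using permv_cbox[OF p] by simp
qed

lemma UNIV_not_cbox_cart: "\<not> (\<exists>a b. (UNIV :: (real^'n) set) = cbox a b)"
  using bounded_cbox not_bounded_UNIV by metis

lemma permv_has_integral:
  fixes f :: "real^'n \<Rightarrow> 'b::banach" and p :: "'m::finite \<Rightarrow> 'n::finite"
  assumes p: "bij p" and f: "(f has_integral i) S"
  shows "((\<lambda>y. f (permv (inv p) y)) has_integral i) (permv p ` S)"
proof -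
  define g where "g = (\<lambda>x. if x \<in> S then f x else 0)"
  have pi: "bij (inv p)" using p by (simp add: bij_imp_bij_inv)
  have g: "(g has_integral i) UNIV" using f has_integral_restrict_UNIV[of S f i] by (simp add: g_def)
  have "((\<lambda>y. g (permv (inv p) y)) has_integral i) UNIV"
  proof (subst has_integral_alt, simp only: if_not_P[OF UNIV_not_cbox_cart], intro allI impI)
    fix e :: real assume e: "e > 0"
    from has_integral_altD[OF g UNIV_not_cbox_cart e] obtain B where B: "B > 0"
      "\<forall>a b. ball 0 B \<subseteq> cbox a b \<longrightarrow>
        (\<exists>z. ((\<lambda>x. if x \<in> UNIV then g x else 0) has_integral z) (cbox a b) \<and> norm (z - i) < e)"
      by blast
    show "\<exists>B>0. \<forall>a b. ball 0 B \<subseteq> cbox a b \<longrightarrow>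
        (\<exists>z. ((\<lambda>x. if x \<in> UNIV then g (permv (inv p) x) else 0) has_integral z) (cbox a b) \<and> norm (z - i) < e)"
    proof (intro exI[of _ B] conjI allI impI)
      show "B > 0" by fact
      fix a b :: "real^'m" assume ab: "ball 0 B \<subseteq> cbox a b"
      have "ball 0 B \<subseteq> cbox (permv (inv p) a) (permv (inv p) b)"
      proof
        fix x :: "real^'n" assume "x \<in> ball 0 B"
        then have "permv p x \<in> cbox a b" using ab norm_permv[OF p, of x] by auto
        then have "permv (inv p) (permv p x) \<in> permv (inv p) ` cbox a b" by blast
        then show "x \<in> cbox (permv (inv p) a) (permv (inv p) b)"
          using permv_cbox[OF pi] permv_inv1[OF p] by simp
      qed
      from B(2)[rule_format, OF this] obtain z where z: "(g has_integral z) (cbox (permv (inv p) a) (permv (inv p) b))" "norm (z - i) < e"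
        by auto
      from permv_has_integral_cbox[OF p z(1)]
      have "((\<lambda>y. g (permv (inv p) y)) has_integral z) (cbox a b)"
        using permv_inv2[OF p] by simp
      then show "\<exists>z. ((\<lambda>x. if x \<in> UNIV then g (permv (inv p) x) else 0) has_integral z) (cbox a b) \<and> norm (z - i) < e"
        using z(2) by auto
    qed
  qed
  moreover have "(\<lambda>y. g (permv (inv p) y)) = (\<lambda>y. if y \<in> permv p ` S then f (permv (inv p) y) else 0)"
  proof
    fix y
    have "y \<in> permv p ` S \<longleftrightarrow> permv (inv p) y \<in> S"
      using permv_inv1[OF p] permv_inv2[OF p] by (metis image_iff)
    then show "g (permv (inv p) y) = (if y \<in> permv p ` S then f (permv (inv p) y) else 0)"
      by (simp add: g_def)
  qed
  ultimately show ?thesis using has_integral_restrict_UNIV[of "permv p ` S" "\<lambda>y. f (permv (inv p) y)" i]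
    by simp
qed

lemma permv_absint:
  fixes f :: "real^'n \<Rightarrow> real" and p :: "'m::finite \<Rightarrow> 'n::finite"
  assumes p: "bij p" and f: "f absolutely_integrable_on S"
  shows "(\<lambda>y. f (permv (inv p) y)) absolutely_integrable_on (permv p ` S) \<and>
         integral (permv p ` S) (\<lambda>y. f (permv (inv p) y)) = integral S f"
proof -
  from f have i1: "(f has_integral integral S f) S"
    and i2: "((\<lambda>x. norm (f x)) has_integral integral S (\<lambda>x. norm (f x))) S"
    by (auto simp: absolutely_integrable_on_def)
  have j1: "((\<lambda>y. f (permv (inv p) y)) has_integral integral S f) (permv p ` S)"
    using permv_has_integral[OF p i1] .
  have j2: "((\<lambda>y. norm (f (permv (inv p) y))) has_integral integral S (\<lambda>x. norm (f x))) (permv p ` S)"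
    using permv_has_integral[OF p i2] .
  show ?thesis using j1 j2 by (auto simp: absolutely_integrable_on_def integrable_on_def integral_unique)
qed

lemma cov_affine_perm:
  fixes l :: "real^'n \<Rightarrow> real^'n" and p :: "'m::{finite,wellorder} \<Rightarrow> 'n::finite" and b :: "real^'n"
  assumes p: "bij p" and l: "linear l" "inj l"
  shows "\<exists>C>0. \<forall>(f::real^'n \<Rightarrow> real) S. (\<lambda>x. f (l x + b)) absolutely_integrable_on S \<longrightarrow>
     f absolutely_integrable_on ((\<lambda>x. l x + b) ` S) \<and>
     integral ((\<lambda>x. l x + b) ` S) f = C * integral S (\<lambda>x. f (l x + b))"
proof -
  obtain li where li: "linear li" "li \<circ> l = id" using linear_injective_left_inverse[OF l] by blast
  have li2: "l \<circ> li = id" using linear_inverse_left[OF l(1) li(1)] li(2) by simp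
  define P :: "real^'n \<Rightarrow> real^'m::{finite,wellorder}" where "P = permv p"
  define Q :: "real^'m::{finite,wellorder} \<Rightarrow> real^'n" where "Q = permv (inv p)"
  have PQ: "\<And>y. P (Q y) = y" and QP: "\<And>x. Q (P x) = x"
    using permv_inv1[OF p] permv_inv2[OF p] by (auto simp: P_def Q_def)
  have linP: "linear P" and linQ: "linear Q" by (simp_all add: P_def Q_def linear_permv)
  define l' where "l' = (\<lambda>y. P (l (Q y)))"
  define li' where "li' = (\<lambda>y. P (li (Q y)))"
  have linl': "linear l'" unfolding l'_def
    using linear_compose[OF linear_compose[OF linQ l(1)] linP] by (simp add: o_def)
  have linli': "linear li'" unfolding li'_def
    using linear_compose[OF linear_compose[OF linQ li(1)] linP] by (simp add: o_def)
  have lili: "\<And>x. li (l x) = x" "\<And>x. l (li x) = x" using li(2) li2 by (metis comp_apply id_apply)+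
  have inv1: "\<And>y. li' (l' y) = y" "\<And>y. l' (li' y) = y"
    by (simp_all add: l'_def li'_def PQ QP lili)
  have injl': "inj l'" by (metis inv1(1) injI)
  define C where "C = \<bar>det (matrix l')\<bar>"
  have C: "C > 0" using det_nz_iff_inj[OF linl'] injl' by (simp add: C_def)
  show ?thesis
  proof (rule exI[of _ C], rule conjI[OF C], intro allI impI)
    fix f :: "real^'n \<Rightarrow> real" and S assume fS: "(\<lambda>x. f (l x + b)) absolutely_integrable_on S"
    define g' where "g' = (\<lambda>y. l' y + P b)"
    define h' where "h' = (\<lambda>z. li' (z - P b))"
    define S' where "S' = P ` S"
    define f' where "f' = (\<lambda>z. f (Q z))"
    have fg: "f' (g' y) = f (l (Q y) + b)" for y
    proof -
      have "g' y = P (l (Q y) + b)" by (simp add: g'_def l'_def linear_add[OF linP])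
      then show ?thesis by (simp add: f'_def QP)
    qed
    have A: "(\<lambda>y. f' (g' y)) absolutely_integrable_on S' \<and> integral S' (\<lambda>y. f' (g' y)) = integral S (\<lambda>x. f (l x + b))"
      using permv_absint[OF p fS] by (simp add: fg S'_def P_def Q_def)
    have hg: "h' (g' x) = x" for x by (simp add: h'_def g'_def inv1)
    have gh: "g' (h' y) = y" for y by (simp add: h'_def g'_def inv1)
    have cov: "(\<lambda>x. \<bar>det (matrix l')\<bar> * f' (g' x)) absolutely_integrable_on S' \<and>
           integral S' (\<lambda>x. \<bar>det (matrix l')\<bar> * f' (g' x)) = C * integral S (\<lambda>x. f (l x + b)) \<longleftrightarrow>
         f' absolutely_integrable_on (g' ` S') \<and> integral (g' ` S') f' = C * integral S (\<lambda>x. f (l x + b))"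
    proof (rule cov_invertible_real[where h=h' and h'="\<lambda>_. li'"])
      show "(g' has_derivative l') (at x within S')" for x
        unfolding g'_def by (intro has_derivative_add_const linear_imp_has_derivative linl')
      show "(h' has_derivative li') (at y within g' ` S')" for y
      proof -
        have "((\<lambda>z. li' z + (- li' (P b))) has_derivative li') (at y within g' ` S')"
          by (intro has_derivative_add_const linear_imp_has_derivative linli')
        then show ?thesis by (simp add: h'_def linear_diff[OF linli'])
      qed
      show "g' x \<in> g' ` S' \<and> h' (g' x) = x" if "x \<in> S'" for x using that hg by auto
      show "h' y \<in> S' \<and> g' (h' y) = y" if "y \<in> g' ` S'" for y using that hg gh by auto
      show "li' \<circ> l' = id" for y using inv1 by (auto simp: fun_eq_iff)
    qed
    have B: "f' absolutely_integrable_on (g' ` S') \<and> integral (g' ` S') f' = C * integral S (\<lambda>x. f (l x + b))"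
      using cov A by (simp add: C_def set_integrable_mult_right)
    have img: "g' ` S' = P ` ((\<lambda>x. l x + b) ` S)"
    proof -
      have "g' (P x) = P (l x + b)" for x by (simp add: g'_def l'_def QP linear_add[OF linP])
      then show ?thesis by (auto simp: S'_def image_iff)
    qed
    have pi: "bij (inv p)" using p by (simp add: bij_imp_bij_inv)
    have ii: "inv (inv p) = p" using p by (simp add: inv_inv_eq)
    have bk: "permv (inv p) ` P ` X = X" for X
      using QP unfolding Q_def[symmetric] image_image by simp
    from permv_absint[OF pi, where f=f' and S="g' ` S'"] B
    show "f absolutely_integrable_on ((\<lambda>x. l x + b) ` S) \<and>
     integral ((\<lambda>x. l x + b) ` S) f = C * integral S (\<lambda>x. f (l x + b))"
      unfolding img ii bk by (simp add: f'_def QP flip: P_def Q_def)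
  qed
qed

definition monom :: "('n \<Rightarrow> nat) \<Rightarrow> real^'n \<Rightarrow> real" where
  "monom \<alpha> x = (\<Prod>i\<in>UNIV. (x$i) ^ \<alpha> i)"

lemma finite_multi: "finite {\<alpha>::'n::finite \<Rightarrow> nat. sum \<alpha> UNIV \<le> k}"
proof -
  have "{\<alpha>::'n \<Rightarrow> nat. sum \<alpha> UNIV \<le> k} \<subseteq> {\<alpha>. \<forall>i. \<alpha> i \<in> {..k}}"
    by (auto intro: order_trans[OF member_le_sum])
  moreover have "finite {\<alpha>::'n \<Rightarrow> nat. \<forall>i. \<alpha> i \<in> {..k}}"
    using finite_PiE[of "UNIV::'n set" "\<lambda>_. {..k}"] by (simp add: PiE_UNIV_domain Pi_def finite_class.finite_UNIV)
  ultimately show ?thesis by (rule finite_subset)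
qed

lemma poly_deg_alt: "poly_deg k p \<longleftrightarrow> (\<exists>c. p = (\<lambda>x. \<Sum>\<alpha>\<in>{\<alpha>. sum \<alpha> UNIV \<le> k}. c \<alpha> * monom \<alpha> x))"
  by (simp add: poly_deg_def monom_def)

lemma poly_deg_add: "poly_deg k p \<Longrightarrow> poly_deg k q \<Longrightarrow> poly_deg k (\<lambda>x. p x + q x)"
  unfolding poly_deg_alt
proof (elim exE)
  fix c d assume "p = (\<lambda>x. \<Sum>\<alpha>\<in>{\<alpha>. sum \<alpha> UNIV \<le> k}. c \<alpha> * monom \<alpha> x)" "q = (\<lambda>x. \<Sum>\<alpha>\<in>{\<alpha>. sum \<alpha> UNIV \<le> k}. d \<alpha> * monom \<alpha> x)"
  then show "\<exists>e. (\<lambda>x. p x + q x) = (\<lambda>x. \<Sum>\<alpha>\<in>{\<alpha>. sum \<alpha> UNIV \<le> k}. e \<alpha> * monom \<alpha> x)"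
    by (intro exI[of _ "\<lambda>\<alpha>. c \<alpha> + d \<alpha>"]) (simp add: sum.distrib distrib_right)
qed

lemma poly_deg_scale: "poly_deg k p \<Longrightarrow> poly_deg k (\<lambda>x. a * p x)"
  unfolding poly_deg_alt
proof (elim exE)
  fix c assume "p = (\<lambda>x. \<Sum>\<alpha>\<in>{\<alpha>. sum \<alpha> UNIV \<le> k}. c \<alpha> * monom \<alpha> x)"
  then show "\<exists>e. (\<lambda>x. a * p x) = (\<lambda>x. \<Sum>\<alpha>\<in>{\<alpha>. sum \<alpha> UNIV \<le> k}. e \<alpha> * monom \<alpha> x)"
    by (intro exI[of _ "\<lambda>\<alpha>. a * c \<alpha>"]) (simp add: sum_distrib_left mult.assoc)
qed

lemma poly_deg_zero: "poly_deg k (\<lambda>x. 0)"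
  unfolding poly_deg_alt by (intro exI[of _ "\<lambda>_. 0"]) simp

lemma poly_deg_sum: "finite I \<Longrightarrow> (\<And>i. i \<in> I \<Longrightarrow> poly_deg k (f i)) \<Longrightarrow> poly_deg k (\<lambda>x. \<Sum>i\<in>I. f i x)"
  by (induction I rule: finite_induct) (auto intro: poly_deg_add poly_deg_zero)

lemma poly_deg_monom: "sum \<alpha> UNIV \<le> k \<Longrightarrow> poly_deg k (\<lambda>x. a * monom \<alpha> x)"
  unfolding poly_deg_alt
proof (intro exI[of _ "\<lambda>\<beta>. if \<beta> = \<alpha> then a else 0"])
  assume le: "sum \<alpha> UNIV \<le> k"
  show "(\<lambda>x. a * monom \<alpha> x) = (\<lambda>x. \<Sum>\<beta>\<in>{\<alpha>. sum \<alpha> UNIV \<le> k}. (if \<beta> = \<alpha> then a else 0) * monom \<beta> x)"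
  proof
    fix x
    have "(\<Sum>\<beta>\<in>{\<alpha>. sum \<alpha> UNIV \<le> k}. (if \<beta> = \<alpha> then a else 0) * monom \<beta> x)
        = (\<Sum>\<beta>\<in>{\<alpha>. sum \<alpha> UNIV \<le> k}. (if \<beta> = \<alpha> then a * monom \<beta> x else 0))"
      by (intro sum.cong) auto
    also have "\<dots> = a * monom \<alpha> x" by (subst sum.delta[OF finite_multi]) (use le in auto)
    finally show "a * monom \<alpha> x = (\<Sum>\<beta>\<in>{\<alpha>. sum \<alpha> UNIV \<le> k}. (if \<beta> = \<alpha> then a else 0) * monom \<beta> x)" by simp
  qed
qed

lemma poly_deg_mono_deg: "k \<le> k' \<Longrightarrow> poly_deg k p \<Longrightarrow> poly_deg k' p"
  unfolding poly_deg_alt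
proof (elim exE)
  fix c assume kk: "k \<le> k'" and p: "p = (\<lambda>x. \<Sum>\<alpha>\<in>{\<alpha>. sum \<alpha> UNIV \<le> k}. c \<alpha> * monom \<alpha> x)"
  have "p = (\<lambda>x. \<Sum>\<alpha>\<in>{\<alpha>. sum \<alpha> UNIV \<le> k}. c \<alpha> * monom \<alpha> x)" by fact
  also have "\<dots> = (\<lambda>x. \<Sum>\<alpha>\<in>{\<alpha>. sum \<alpha> UNIV \<le> k'}. (if sum \<alpha> UNIV \<le> k then c \<alpha> else 0) * monom \<alpha> x)"
  proof
    fix x
    show "(\<Sum>\<alpha>\<in>{\<alpha>. sum \<alpha> UNIV \<le> k}. c \<alpha> * monom \<alpha> x) = (\<Sum>\<alpha>\<in>{\<alpha>. sum \<alpha> UNIV \<le> k'}. (if sum \<alpha> UNIV \<le> k then c \<alpha> else 0) * monom \<alpha> x)"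
      using kk finite_multi[of k'] by (intro sum.mono_neutral_cong_left) auto
  qed
  finally show "\<exists>e. p = (\<lambda>x. \<Sum>\<alpha>\<in>{\<alpha>. sum \<alpha> UNIV \<le> k'}. e \<alpha> * monom \<alpha> x)"
    by (rule exI[of _ "\<lambda>\<alpha>. if sum \<alpha> UNIV \<le> k then c \<alpha> else 0"])
qed

lemma monom_mult: "monom \<alpha> x * monom \<beta> x = monom (\<lambda>i. \<alpha> i + \<beta> i) x"
  by (simp add: monom_def power_add prod.distrib)

lemma poly_deg_mult: "poly_deg a p \<Longrightarrow> poly_deg b q \<Longrightarrow> poly_deg (a + b) (\<lambda>x. p x * q x)"
proof -
  assume "poly_deg a p" "poly_deg b q"
  then obtain c d where p: "p = (\<lambda>x. \<Sum>\<alpha>\<in>{\<alpha>. sum \<alpha> UNIV \<le> a}. c \<alpha> * monom \<alpha> x)"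
    and q: "q = (\<lambda>x. \<Sum>\<alpha>\<in>{\<alpha>. sum \<alpha> UNIV \<le> b}. d \<alpha> * monom \<alpha> x)"
    unfolding poly_deg_alt by blast
  have eq: "(\<lambda>x. p x * q x) = (\<lambda>x. \<Sum>\<alpha>\<in>{\<alpha>. sum \<alpha> UNIV \<le> a}. \<Sum>\<beta>\<in>{\<alpha>. sum \<alpha> UNIV \<le> b}. (c \<alpha> * d \<beta>) * monom (\<lambda>i. \<alpha> i + \<beta> i) x)"
    by (simp add: p q sum_product monom_mult[symmetric] mult_ac)
  have "poly_deg (a + b) (\<lambda>x. \<Sum>\<alpha>\<in>{\<alpha>. sum \<alpha> UNIV \<le> a}. \<Sum>\<beta>\<in>{\<alpha>. sum \<alpha> UNIV \<le> b}. (c \<alpha> * d \<beta>) * monom (\<lambda>i. \<alpha> i + \<beta> i) x)"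
    by (intro poly_deg_sum finite_multi poly_deg_monom) (auto simp: sum.distrib intro: add_mono)
  then show ?thesis unfolding eq .
qed

lemma poly_deg_const: "poly_deg k (\<lambda>x. a)"
proof -
  have "poly_deg k (\<lambda>x. a * monom (\<lambda>_. 0) x)" by (rule poly_deg_monom) simp
  then show ?thesis by (simp add: monom_def)
qed

lemma poly_deg_coord: "poly_deg 1 (\<lambda>x. x $ j)"
proof -
  have "poly_deg 1 (\<lambda>x. 1 * monom (\<lambda>i. if i = j then 1 else 0) x)"
    by (rule poly_deg_monom) simp
  moreover have "monom (\<lambda>i. if i = j then 1 else 0) x = x $ j" for x
    by (simp add: monom_def if_distrib[of "\<lambda>e. (x$_)^e"] prod.If_cases)
  ultimately show ?thesis by simp
qed

lemma poly_deg_prod: "finite I \<Longrightarrow> (\<And>i. i \<in> I \<Longrightarrow> poly_deg (d i) (f i)) \<Longrightarrow> poly_deg (\<Sum>i\<in>I. d i) (\<lambda>x. \<Prod>i\<in>I. f i x)"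
proof (induction I rule: finite_induct)
  case empty then show ?case by (simp add: poly_deg_const)
next
  case (insert i I)
  then show ?case by (simp add: poly_deg_mult)
qed

lemma poly_deg_power: "poly_deg a p \<Longrightarrow> poly_deg (a * n) (\<lambda>x. p x ^ n)"
proof (induction n)
  case 0 then show ?case by (simp add: poly_deg_const)
next
  case (Suc n)
  then have "poly_deg (a + a * n) (\<lambda>x. p x * p x ^ n)" by (intro poly_deg_mult)
  then show ?case by simp
qed

lemma poly_deg_comp:
  assumes p: "poly_deg k p" and A: "\<And>i. poly_deg 1 (\<lambda>x. A x $ i)"
  shows "poly_deg k (\<lambda>x. p (A x))"
proof -
  obtain c where c: "p = (\<lambda>x. \<Sum>\<alpha>\<in>{\<alpha>. sum \<alpha> UNIV \<le> k}. c \<alpha> * monom \<alpha> x)"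
    using p unfolding poly_deg_alt by blast
  have "poly_deg k (\<lambda>x. \<Sum>\<alpha>\<in>{\<alpha>. sum \<alpha> UNIV \<le> k}. c \<alpha> * monom \<alpha> (A x))"
  proof (intro poly_deg_sum finite_multi poly_deg_scale)
    fix \<alpha> :: "'a \<Rightarrow> nat" assume "\<alpha> \<in> {\<alpha>. sum \<alpha> UNIV \<le> k}"
    then have le: "sum \<alpha> UNIV \<le> k" by simp
    have "poly_deg (\<Sum>i\<in>UNIV. 1 * \<alpha> i) (\<lambda>x. \<Prod>i\<in>UNIV. (A x $ i) ^ \<alpha> i)"
      by (intro poly_deg_prod poly_deg_power A) simp
    then show "poly_deg k (\<lambda>x. monom \<alpha> (A x))"
      using le by (auto simp: monom_def intro: poly_deg_mono_deg)
  qed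
  then show ?thesis by (simp add: c)
qed

lemma poly_deg_affine: "poly_deg 1 (\<lambda>x. (M *v x + b) $ i)"
proof -
  have "poly_deg 1 (\<lambda>x. (\<Sum>j\<in>UNIV. M $ i $ j * x $ j) + b $ i)"
    by (intro poly_deg_add poly_deg_sum poly_deg_scale poly_deg_coord poly_deg_const) auto
  then show ?thesis by (simp add: matrix_vector_mult_def)
qed

lemma poly_deg_cont: "poly_deg k p \<Longrightarrow> continuous_on S p"
  unfolding poly_deg_def by (auto intro!: continuous_intros)

lemma minv: assumes "invertible (A::real^'n^'n)"
  shows "A ** matrix_inv A = mat 1" "matrix_inv A ** A = mat 1"
proof -
  have "\<exists>A'. A ** A' = mat 1 \<and> A' ** A = mat 1" using assms by (simp add: invertible_def)
  then have "A ** matrix_inv A = mat 1 \<and> matrix_inv A ** A = mat 1"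
    unfolding matrix_inv_def by (rule someI_ex)
  then show "A ** matrix_inv A = mat 1" "matrix_inv A ** A = mat 1" by auto
qed

lemma minv_unique: assumes "(A::real^'n^'n) ** B = mat 1" "B ** A = mat 1"
  shows "matrix_inv A = B"
proof -
  have inv: "invertible A" using assms by (auto simp: invertible_def)
  have "matrix_inv A = (B ** A) ** matrix_inv A" by (simp add: assms)
  also have "\<dots> = B ** (A ** matrix_inv A)" by (simp add: matrix_mul_assoc)
  also have "\<dots> = B" by (simp add: minv[OF inv])
  finally show ?thesis .
qed

lemma invertible_minv: "invertible (A::real^'n^'n) \<Longrightarrow> invertible (matrix_inv A)"
  using minv by (auto simp: invertible_def)

lemma minv_minv: "invertible (A::real^'n^'n) \<Longrightarrow> matrix_inv (matrix_inv A) = A"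
  using minv by (intro minv_unique) auto

lemma invertible_transpose': "invertible (A::real^'n^'n) \<Longrightarrow> invertible (transpose A)"
proof -
  assume "invertible A"
  then have "transpose A ** transpose (matrix_inv A) = mat 1" "transpose (matrix_inv A) ** transpose A = mat 1"
    using minv[OF \<open>invertible A\<close>] by (simp_all add: matrix_transpose_mul[symmetric] transpose_mat)
  then show ?thesis by (auto simp: invertible_def)
qed

lemma minv_transpose: "invertible (A::real^'n^'n) \<Longrightarrow> matrix_inv (transpose A) = transpose (matrix_inv A)"
proof -
  assume "invertible A"
  then have "transpose A ** transpose (matrix_inv A) = mat 1" "transpose (matrix_inv A) ** transpose A = mat 1"
    using minv[OF \<open>invertible A\<close>] by (simp_all add: matrix_transpose_mul[symmetric] transpose_mat)
  then show ?thesis by (rule minv_unique)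
qed

lemma minv_mult: "invertible (A::real^'n^'n) \<Longrightarrow> invertible (B::real^'n^'n) \<Longrightarrow> matrix_inv (A ** B) = matrix_inv B ** matrix_inv A"
proof -
  assume a: "invertible A" and b: "invertible B"
  have "(A ** B) ** (matrix_inv B ** matrix_inv A) = A ** (B ** matrix_inv B) ** matrix_inv A"
    by (simp add: matrix_mul_assoc)
  also have "\<dots> = mat 1" using minv[OF a] minv[OF b] by simp
  finally have 1: "(A ** B) ** (matrix_inv B ** matrix_inv A) = mat 1" .
  have "(matrix_inv B ** matrix_inv A) ** (A ** B) = matrix_inv B ** (matrix_inv A ** A) ** B"
    by (simp add: matrix_mul_assoc)
  also have "\<dots> = mat 1" using minv[OF a] minv[OF b] by simp
  finally have 2: "(matrix_inv B ** matrix_inv A) ** (A ** B) = mat 1" .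
  show ?thesis using 1 2 by (rule minv_unique)
qed

lemma minv_vec1: "invertible (A::real^'n^'n) \<Longrightarrow> matrix_inv A *v (A *v x) = x"
  by (simp add: matrix_vector_mul_assoc minv)

lemma minv_vec2: "invertible (A::real^'n^'n) \<Longrightarrow> A *v (matrix_inv A *v x) = x"
  by (simp add: matrix_vector_mul_assoc minv)

lemma invertible_mat1: "invertible (mat 1 :: real^'n^'n)"
  by (auto simp: invertible_def)

lemma minv_mat1: "matrix_inv (mat 1 :: real^'n^'n) = mat 1"
  by (rule minv_unique) simp_all

section \<open>Affine images and facets\<close>

lemma affine_image_eq: "(\<lambda>x. G *v x + b) ` S = (+) b ` ((*v) G ` S)"
  by (auto simp: image_iff add.commute)

lemma facet_affine_image:
  assumes G: "invertible (G::real^'n^'n)" and F: "F facet_of K"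
  shows "(\<lambda>x. G *v x + b) ` F facet_of (\<lambda>x. G *v x + b) ` K"
proof -
  have lin: "linear ((*v) G)" by (rule matrix_vector_mul_linear)
  have inj: "inj ((*v) G)" by (rule inj_matrix_vector_mult[OF G])
  from F have "F face_of K" "F \<noteq> {}" "aff_dim F = aff_dim K - 1" by (auto simp: facet_of_def)
  then show ?thesis
    unfolding affine_image_eq facet_of_def
    using face_of_linear_image[OF lin inj] aff_dim_injective_linear_image[OF lin inj]
    by (simp add: aff_dim_translation_eq)
qed

lemma aff_dim_affine_image:
  assumes G: "invertible (G::real^'n^'n)"
  shows "aff_dim ((\<lambda>x. G *v x + b) ` K) = aff_dim K"
proof -
  have lin: "linear ((*v) G)" by (rule matrix_vector_mul_linear)
  have inj: "inj ((*v) G)" by (rule inj_matrix_vector_mult[OF G])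
  show ?thesis unfolding affine_image_eq
    by (simp add: aff_dim_translation_eq aff_dim_injective_linear_image[OF lin inj])
qed

lemma compact_affine_image: "compact K \<Longrightarrow> compact ((\<lambda>x. (G::real^'n^'n) *v x + b) ` K)"
  by (intro compact_continuous_image continuous_intros) auto

lemma convex_affine_image: "convex K \<Longrightarrow> convex ((\<lambda>x. (G::real^'n^'n) *v x + b) ` K)"
  unfolding affine_image_eq
  by (intro convex_translation convex_linear_image matrix_vector_mul_linear)

section \<open>Facet normals\<close>

lemma facet_dim:
  fixes F K :: "(real^'n) set"
  assumes F: "F facet_of K" and K: "aff_dim K = int CARD('n)" and a: "a \<in> F"
  shows "dim ((\<lambda>x. x - a) ` F) = CARD('n) - 1" "CARD('n) \<ge> 1"
proof -
  have "aff_dim F = int CARD('n) - 1" using F K by (simp add: facet_of_def)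
  moreover have "aff_dim F = int (dim ((\<lambda>x. x - a) ` F))"
    using a by (intro aff_dim_eq_dim_subtract) (simp add: hull_inc)
  ultimately show "dim ((\<lambda>x. x - a) ` F) = CARD('n) - 1" by linarith
  show "CARD('n) \<ge> 1" by (simp add: Suc_leI)
qed

lemma facet_normal_ex:
  fixes F K :: "(real^'n) set"
  assumes F: "F facet_of K" and K: "aff_dim K = int CARD('n)"
  shows "\<exists>n. norm n = 1 \<and> (\<forall>x\<in>F. \<forall>y\<in>F. n \<bullet> (x - y) = 0)"
proof -
  obtain a where a: "a \<in> F" using F by (auto simp: facet_of_def)
  note d = facet_dim[OF F K a]
  have "dim ((\<lambda>x. x - a) ` F) < DIM(real^'n)" using d by simp
  then obtain v where v: "v \<noteq> 0" "\<And>y. y \<in> span ((\<lambda>x. x - a) ` F) \<Longrightarrow> orthogonal v y"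
    using orthogonal_to_subspace_exists by metis
  have "(v /\<^sub>R norm v) \<bullet> (x - y) = 0" if "x \<in> F" "y \<in> F" for x y
  proof -
    have "x - a \<in> span ((\<lambda>x. x - a) ` F)" "y - a \<in> span ((\<lambda>x. x - a) ` F)"
      using that by (auto intro: span_base)
    then have "x - y \<in> span ((\<lambda>x. x - a) ` F)"
      using span_diff by fastforce
    then show ?thesis using v(2) by (simp add: orthogonal_def)
  qed
  then show ?thesis using v(1) by (intro exI[of _ "v /\<^sub>R norm v"]) simp
qed

lemma facet_normal_props:
  fixes F K :: "(real^'n) set"
  assumes F: "F facet_of K" and K: "aff_dim K = int CARD('n)"
  shows "norm (facet_normal F) = 1" "\<And>x y. x \<in> F \<Longrightarrow> y \<in> F \<Longrightarrow> facet_normal F \<bullet> (x - y) = 0"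
proof -
  have "norm (facet_normal F) = 1 \<and> (\<forall>x\<in>F. \<forall>y\<in>F. facet_normal F \<bullet> (x - y) = 0)"
    unfolding facet_normal_def using facet_normal_ex[OF F K] by (rule someI_ex)
  then show "norm (facet_normal F) = 1" "\<And>x y. x \<in> F \<Longrightarrow> y \<in> F \<Longrightarrow> facet_normal F \<bullet> (x - y) = 0"
    by auto
qed

lemma facet_normal_unique:
  fixes F K :: "(real^'n) set"
  assumes F: "F facet_of K" and K: "aff_dim K = int CARD('n)"
    and n: "norm n = 1" "\<And>x y. x \<in> F \<Longrightarrow> y \<in> F \<Longrightarrow> n \<bullet> (x - y) = 0"
    and m: "\<And>x y. x \<in> F \<Longrightarrow> y \<in> F \<Longrightarrow> m \<bullet> (x - y) = 0"
  shows "m = (m \<bullet> n) *\<^sub>R n"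
proof -
  obtain a where a: "a \<in> F" using F by (auto simp: facet_of_def)
  define S where "S = (\<lambda>x. x - a) ` F"
  note d = facet_dim[OF F K a]
  define w where "w = m - (m \<bullet> n) *\<^sub>R n"
  have nn: "n \<bullet> n = 1" using n(1) by (simp add: norm_eq_1)
  have wS: "orthogonal w y" if "y \<in> S" for y
    using that n(2) m a by (auto simp: S_def w_def orthogonal_def inner_diff_left)
  have "w \<bullet> n = m \<bullet> n - (m \<bullet> n) * (n \<bullet> n)" by (simp add: w_def inner_diff_left)
  then have wn: "orthogonal w n" by (simp add: orthogonal_def nn)
  have nS: "orthogonal n y" if "y \<in> S" for y
    using that n(2) a by (auto simp: S_def orthogonal_def)
  have "n \<notin> span S"
  proof
    assume "n \<in> span S"
    then have "orthogonal n n" using orthogonal_to_span nS by blast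
    then show False using nn by (simp add: orthogonal_def)
  qed
  then have "dim (insert n S) = dim S + 1" by (simp add: dim_insert)
  also have "\<dots> = DIM(real^'n)" using d(1) d(2) by (simp add: S_def)
  finally have "span (insert n S) = UNIV" using dim_eq_full by blast
  then have "w \<in> span (insert n S)" by simp
  moreover have "orthogonal w y" if "y \<in> insert n S" for y using that wS wn by auto
  ultimately have "orthogonal w w" using orthogonal_to_span by blast
  then have "w = 0" by (simp add: orthogonal_def)
  then show ?thesis by (simp add: w_def)
qed

section \<open>Reference simplex\<close>

lemma ref_simplex_compact: "compact (ref_simplex :: (real^'n) set)"
proof -
  have cl: "closed (ref_simplex :: (real^'n) set)"
  proof -
    have "ref_simplex = (\<Inter>i. {x::real^'n. 0 \<le> x $ i}) \<inter> {x. (\<Sum>i\<in>UNIV. x $ i) \<le> 1}"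
      by (auto simp: ref_simplex_def)
    also have "closed \<dots>"
      by (intro closed_Int closed_INT ballI closed_Collect_le continuous_intros)
    finally show ?thesis .
  qed
  have "ref_simplex \<subseteq> cbox (0::real^'n) 1"
  proof
    fix x :: "real^'n" assume x: "x \<in> ref_simplex"
    have "x $ i \<le> 1" for i
    proof -
      have "x $ i \<le> (\<Sum>j\<in>UNIV. x $ j)"
        using x by (intro member_le_sum) (auto simp: ref_simplex_def)
      then show ?thesis using x by (auto simp: ref_simplex_def)
    qed
    then show "x \<in> cbox 0 1" using x by (auto simp: mem_box_cart ref_simplex_def)
  qed
  then have "bounded (ref_simplex :: (real^'n) set)" using bounded_cbox bounded_subset by blast
  then show ?thesis using cl by (simp add: compact_eq_bounded_closed)
qed

lemma ref_simplex_convex: "convex (ref_simplex :: (real^'n) set)"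
proof (rule convexI)
  fix x y :: "real^'n" and u v :: real
  assume xs: "x \<in> ref_simplex" and ys: "y \<in> ref_simplex" and uv1: "0 \<le> u" "0 \<le> v" "u + v = 1"
  then have uv': "0 \<le> u \<and> 0 \<le> v \<and> u + v = 1" by simp
  from xs have x: "\<forall>i. 0 \<le> x $ i" "sum (($) x) UNIV \<le> 1" by (auto simp: ref_simplex_def)
  from ys have y: "\<forall>i. 0 \<le> y $ i" "sum (($) y) UNIV \<le> 1" by (auto simp: ref_simplex_def)
  from uv' have uv: "0 \<le> u" "0 \<le> v" "u + v = 1" by auto
  have "(\<forall>i. 0 \<le> u * x $ i + v * y $ i) \<and> (\<Sum>i\<in>UNIV. u * x $ i + v * y $ i) \<le> 1"
  proof
    show "\<forall>i. 0 \<le> u * x $ i + v * y $ i" using x y uv by simp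
    have "(\<Sum>i\<in>UNIV. u * x $ i + v * y $ i) = u * sum (($) x) UNIV + v * sum (($) y) UNIV"
      by (simp add: sum.distrib sum_distrib_left)
    also have "\<dots> \<le> u * 1 + v * 1" using x y uv by (intro add_mono mult_left_mono) auto
    finally show "(\<Sum>i\<in>UNIV. u * x $ i + v * y $ i) \<le> 1" using uv by simp
  qed
  then show "u *\<^sub>R x + v *\<^sub>R y \<in> ref_simplex" by (simp add: ref_simplex_def)
qed

lemma ref_simplex_aff_dim: "aff_dim (ref_simplex :: (real^'n) set) = int CARD('n)"
proof -
  have z: "(0::real^'n) \<in> ref_simplex" by (simp add: ref_simplex_def)
  have "aff_dim (ref_simplex :: (real^'n) set) = int (dim (ref_simplex :: (real^'n) set))"
    using z by (intro aff_dim_zero) (simp add: hull_inc)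
  moreover have "(Basis :: (real^'n) set) \<subseteq> ref_simplex"
  proof
    fix v :: "real^'n" assume "v \<in> Basis"
    then obtain i where v: "v = axis i 1" by (auto simp: Basis_vec_def)
    have "(\<Sum>j\<in>UNIV. axis i (1::real) $ j) = 1" by (simp add: axis_def)
    then show "v \<in> ref_simplex" by (simp add: v ref_simplex_def axis_def)
  qed
  then have "dim (Basis :: (real^'n) set) \<le> dim (ref_simplex :: (real^'n) set)" by (rule dim_subset)
  moreover have "dim (Basis :: (real^'n) set) = CARD('n)"
    by (metis dim_UNIV dim_span span_Basis DIM_cart DIM_real mult_1_right)
  moreover have "dim (ref_simplex :: (real^'n) set) \<le> CARD('n)"
    using dim_subset_UNIV[of "ref_simplex :: (real^'n) set"] by simp
  ultimately show ?thesis by simp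
qed

definition ntv :: "real^'n \<Rightarrow> real^'n^'n \<Rightarrow> real^'n" where
  "ntv n A = A *v n - (n \<bullet> (A *v n)) *\<^sub>R n"

lemma nt_ntv: "nt F A = ntv (facet_normal F) A"
  by (simp add: nt_def ntv_def Let_def)

lemma mat_entry3: "(B ** A ** C :: real^'n^'n) $ i $ j = (\<Sum>k\<in>UNIV. \<Sum>l\<in>UNIV. (B $ i $ k * C $ l $ j) * A $ k $ l)"
proof -
  have "(B ** A ** C) $ i $ j = (\<Sum>l\<in>UNIV. (\<Sum>k\<in>UNIV. B $ i $ k * A $ k $ l) * C $ l $ j)"
    by (simp add: matrix_matrix_mult_def)
  also have "\<dots> = (\<Sum>l\<in>UNIV. \<Sum>k\<in>UNIV. (B $ i $ k * C $ l $ j) * A $ k $ l)"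
    by (intro sum.cong refl) (simp add: sum_distrib_right sum_distrib_left mult_ac)
  also have "\<dots> = (\<Sum>k\<in>UNIV. \<Sum>l\<in>UNIV. (B $ i $ k * C $ l $ j) * A $ k $ l)"
    by (rule sum.swap)
  finally show ?thesis .
qed

lemma mat_entry3_scale: "(c *\<^sub>R (B ** A ** C) :: real^'n^'n) $ i $ j = (\<Sum>k\<in>UNIV. \<Sum>l\<in>UNIV. (c * B $ i $ k * C $ l $ j) * A $ k $ l)"
  by (simp add: mat_entry3 sum_distrib_left mult_ac)

lemma ntv_transform:
  fixes B A :: "real^'n^'n"
  assumes B: "invertible B" and n0: "n0 \<bullet> n0 = 1" and Bn: "B *v n = lam *\<^sub>R n0" and lam: "lam \<noteq> 0"
  shows "ntv n0 (c *\<^sub>R (B ** A ** matrix_inv B)) =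
         (c / lam) *\<^sub>R (B *v ntv n A - (n0 \<bullet> (B *v ntv n A)) *\<^sub>R n0)"
proof -
  have "n = matrix_inv B *v (B *v n)" by (simp add: minv_vec1[OF B])
  also have "\<dots> = lam *\<^sub>R (matrix_inv B *v n0)" by (simp add: Bn matrix_vector_mult_scaleR)
  finally have Hn: "matrix_inv B *v n0 = (1 / lam) *\<^sub>R n" using lam by (simp add: field_simps)
  define a where "a = n \<bullet> (A *v n)"
  define u where "u = B *v ntv n A"
  have An: "B *v (A *v n) = u + (a * lam) *\<^sub>R n0"
    by (simp add: u_def ntv_def a_def matrix_vector_mult_diff_distrib matrix_vector_mult_scaleR Bn)
  have "c *\<^sub>R (B ** A ** matrix_inv B) *v n0 = c *\<^sub>R (B *v (A *v (matrix_inv B *v n0)))"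
    by (simp add: scaleR_matrix_vector_assoc[symmetric] matrix_vector_mul_assoc matrix_mul_assoc)
  also have "\<dots> = (c / lam) *\<^sub>R u + (c * a) *\<^sub>R n0"
    using lam by (simp add: Hn matrix_vector_mult_scaleR An scaleR_add_right)
  finally have M: "c *\<^sub>R (B ** A ** matrix_inv B) *v n0 = (c / lam) *\<^sub>R u + (c * a) *\<^sub>R n0" .
  have "ntv n0 (c *\<^sub>R (B ** A ** matrix_inv B)) = ((c / lam) *\<^sub>R u + (c * a) *\<^sub>R n0)
     - (n0 \<bullet> ((c / lam) *\<^sub>R u + (c * a) *\<^sub>R n0)) *\<^sub>R n0"
    by (simp only: ntv_def M)
  also have "\<dots> = (c / lam) *\<^sub>R (u - (n0 \<bullet> u) *\<^sub>R n0)"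
    by (simp add: inner_add_right n0 scaleR_diff_right scaleR_add_left)
  finally show ?thesis by (simp only: u_def)
qed

lemma frob_trace: "frob X Y = trace (transpose X ** (Y :: real^'n^'n))"
proof -
  have "trace (transpose X ** Y) = (\<Sum>i\<in>UNIV. \<Sum>j\<in>UNIV. X$j$i * Y$j$i)"
    by (simp add: trace_def matrix_matrix_mult_def transpose_def)
  also have "\<dots> = (\<Sum>j\<in>UNIV. \<Sum>i\<in>UNIV. X$j$i * Y$j$i)" by (rule sum.swap)
  finally show ?thesis by (simp add: frob_def)
qed

lemma frob_transform: "frob (c *\<^sub>R (B ** A ** C)) (D :: real^'n^'n) = c * frob A (transpose B ** D ** transpose C)"
proof -
  have "frob (B ** A ** C) D = trace (transpose C ** transpose A ** transpose B ** D)"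
    by (simp add: frob_trace matrix_transpose_mul matrix_mul_assoc)
  also have "\<dots> = trace (transpose A ** (transpose B ** D ** transpose C))"
    using trace_mul_sym[of "transpose C" "transpose A ** transpose B ** D"]
    by (simp add: matrix_mul_assoc)
  also have "\<dots> = frob A (transpose B ** D ** transpose C)" by (simp add: frob_trace)
  finally have "frob (B ** A ** C) D = frob A (transpose B ** D ** transpose C)" .
  moreover have "frob (c *\<^sub>R X) D = c * frob X D" for X
    by (simp add: frob_def sum_distrib_left mult_ac)
  ultimately show ?thesis by simp
qed

lemma trace_transform: "invertible (B::real^'n^'n) \<Longrightarrow> trace (c *\<^sub>R (B ** A ** matrix_inv B)) = c * trace A"
proof -
  assume B: "invertible B"
  have "trace (B ** A ** matrix_inv B) = trace (matrix_inv B ** (B ** A))"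
    using trace_mul_sym[of "B ** A" "matrix_inv B"] by simp
  also have "\<dots> = trace A" by (simp add: matrix_mul_assoc minv[OF B])
  moreover have "trace (c *\<^sub>R X) = c * trace X" for X :: "real^'n^'n"
    by (simp add: trace_def sum_distrib_left)
  ultimately show ?thesis by simp
qed

definition Nmat :: "real^'n \<Rightarrow> real^'n \<Rightarrow> real^'n^'n" where
  "Nmat n v = (\<chi> i j. v $ i * n $ j - (n \<bullet> v) * n $ i * n $ j)"

lemma ntv_inner: "ntv n A \<bullet> v = frob A (Nmat n v)"
proof -
  have 1: "(A *v n) \<bullet> v = (\<Sum>i\<in>UNIV. \<Sum>j\<in>UNIV. A $ i $ j * (v $ i * n $ j))"
    unfolding inner_vec_def inner_real_def matrix_vector_mult_def
    by (intro sum.cong refl) (simp add: sum_distrib_right sum_distrib_left mult_ac)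
  have 2: "(n \<bullet> (A *v n)) * (n \<bullet> v) = (\<Sum>i\<in>UNIV. \<Sum>j\<in>UNIV. A $ i $ j * ((n \<bullet> v) * n $ i * n $ j))"
    unfolding inner_vec_def inner_real_def matrix_vector_mult_def sum_distrib_right
    by (intro sum.cong refl) (simp add: sum_distrib_right sum_distrib_left mult_ac)
  have "ntv n A \<bullet> v = (A *v n) \<bullet> v - (n \<bullet> (A *v n)) * (n \<bullet> v)"
    by (simp add: ntv_def inner_diff_left)
  also have "\<dots> = frob A (Nmat n v)"
    unfolding 1 2 frob_def Nmat_def by (simp add: sum_subtractf right_diff_distrib)
  finally show ?thesis .
qed

lemma Pmat_ex: "\<exists>L::real^'n^'n. \<forall>v. L *v v = v - (n0 \<bullet> v) *\<^sub>R n0"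
proof (intro exI allI)
  fix v :: "real^'n"
  have "(\<chi> i j. n0 $ i * n0 $ j) *v v = (n0 \<bullet> v) *\<^sub>R n0"
    unfolding vec_eq_iff matrix_vector_mult_def inner_vec_def inner_real_def
    by (simp add: sum_distrib_left sum_distrib_right mult_ac)
  then show "(mat 1 - (\<chi> i j. n0 $ i * n0 $ j)) *v v = v - (n0 \<bullet> v) *\<^sub>R n0"
    by (simp add: matrix_vector_mult_diff_rdistrib)
qed

definition cov_ok :: "('n::finite) itself \<Rightarrow> bool" where
  "cov_ok _ \<longleftrightarrow> (\<forall>(l::real^'n \<Rightarrow> real^'n) b. linear l \<and> inj l \<longrightarrow>
     (\<exists>C>0. \<forall>(f::real^'n \<Rightarrow> real) S. (\<lambda>x. f (l x + b)) absolutely_integrable_on S \<longrightarrow>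
        f absolutely_integrable_on ((\<lambda>x. l x + b) ` S) \<and>
        integral ((\<lambda>x. l x + b) ` S) f = C * integral S (\<lambda>x. f (l x + b))))"

lemma cov_okD:
  assumes "cov_ok TYPE('n::finite)" "linear (l::real^'n \<Rightarrow> real^'n)" "inj l"
  shows "\<exists>C>0. \<forall>(f::real^'n \<Rightarrow> real) S. (\<lambda>x. f (l x + b)) absolutely_integrable_on S \<longrightarrow>
        f absolutely_integrable_on ((\<lambda>x. l x + b) ` S) \<and>
        integral ((\<lambda>x. l x + b) ` S) f = C * integral S (\<lambda>x. f (l x + b))"
  using assms unfolding cov_ok_def by blast

lemma cov_rev:
  assumes ok: "cov_ok TYPE('n::finite)" and l: "linear (l::real^'n \<Rightarrow> real^'n)" "inj l"
    and f: "(f::real^'n \<Rightarrow> real) absolutely_integrable_on ((\<lambda>x. l x + b) ` S)"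
  shows "(\<lambda>x. f (l x + b)) absolutely_integrable_on S"
proof -
  obtain li where li: "linear li" "li \<circ> l = id" using linear_injective_left_inverse[OF l] by blast
  have li2: "l \<circ> li = id" using linear_inverse_left[OF l(1) li(1)] li(2) by simp
  have lili: "\<And>x. li (l x) = x" "\<And>x. l (li x) = x" using li(2) li2 by (metis comp_apply id_apply)+
  have injli: "inj li" by (metis lili(2) injI)
  obtain C where C: "\<forall>(h::real^'n \<Rightarrow> real) T. (\<lambda>y. h (li y + (- li b))) absolutely_integrable_on T \<longrightarrow>
        h absolutely_integrable_on ((\<lambda>y. li y + (- li b)) ` T) \<and> integral ((\<lambda>y. li y + (- li b)) ` T) h = C * integral T (\<lambda>y. h (li y + (- li b)))"
    using cov_okD[OF ok li(1) injli, of "- li b"] by blast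
  have e1: "l (li y - li b) + b = y" for y
    using linear_add[OF l(1)] linear_diff[OF l(1)] lili by simp
  have e2: "li (l x + b) - li b = x" for x
    using linear_add[OF li(1)] lili by simp
  have "(\<lambda>y. f (l (li y + (- li b)) + b)) absolutely_integrable_on ((\<lambda>x. l x + b) ` S)"
    using f by (simp add: e1)
  then have "(\<lambda>x. f (l x + b)) absolutely_integrable_on ((\<lambda>y. li y + (- li b)) ` ((\<lambda>x. l x + b) ` S))"
    using C[rule_format, where h="\<lambda>z. f (l z + b)" and T="(\<lambda>x. l x + b) ` S"] by blast
  moreover have "(\<lambda>y. li y + (- li b)) ` ((\<lambda>x. l x + b) ` S) = S"
    by (simp add: image_image e2)
  ultimately show ?thesis by simp
qed

lemma cov_full:
  assumes ok: "cov_ok TYPE('n::finite)" and l: "linear (l::real^'n \<Rightarrow> real^'n)" "inj l"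
  shows "\<exists>C>0. \<forall>(f::real^'n \<Rightarrow> real) S.
     (f absolutely_integrable_on ((\<lambda>x. l x + b) ` S) \<longleftrightarrow> (\<lambda>x. f (l x + b)) absolutely_integrable_on S) \<and>
     ((\<lambda>x. f (l x + b)) absolutely_integrable_on S \<longrightarrow>
        integral ((\<lambda>x. l x + b) ` S) f = C * integral S (\<lambda>x. f (l x + b)))"
  using cov_okD[OF ok l, of b] cov_rev[OF ok l] by metis

section \<open>Prisms\<close>

lemma inner_mat: "n \<bullet> ((G::real^'n^'n) *v w) = (transpose G *v n) \<bullet> w"
  by (simp add: dot_lmul_matrix[symmetric])

lemma prism_map:
  fixes G :: "real^'n^'n" and F0 :: "(real^'n) set" and b :: "real^'n"
  defines "\<psi> \<equiv> (\<lambda>x. G *v x + b)"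
  assumes G: "invertible G" and F0ne: "F0 \<noteq> {}"
    and n0: "facet_normal F0 \<bullet> facet_normal F0 = 1"
    and n0F: "\<And>x y. x \<in> F0 \<Longrightarrow> y \<in> F0 \<Longrightarrow> facet_normal F0 \<bullet> (x - y) = 0"
    and n: "facet_normal (\<psi> ` F0) \<bullet> facet_normal (\<psi> ` F0) = 1"
    and nF: "\<And>x y. x \<in> \<psi> ` F0 \<Longrightarrow> y \<in> \<psi> ` F0 \<Longrightarrow> facet_normal (\<psi> ` F0) \<bullet> (x - y) = 0"
    and lam: "transpose G *v facet_normal (\<psi> ` F0) = lam *\<^sub>R facet_normal F0" "lam \<noteq> 0"
  shows "\<exists>l c. linear l \<and> inj l \<and> (\<lambda>x. l x + c) ` facet_prism F0 = facet_prism (\<psi> ` F0) \<and>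
     (\<forall>x\<in>facet_prism F0. facet_proj (\<psi> ` F0) (l x + c) = \<psi> (facet_proj F0 x))"
proof -
  define F where "F = \<psi> ` F0"
  define m0 where "m0 = facet_normal F0"
  define m where "m = facet_normal F"
  define c0 where "c0 = (SOME c. c \<in> F0)"
  define c1 where "c1 = (SOME c. c \<in> F)"
  have c0: "c0 \<in> F0" using F0ne by (simp add: c0_def some_in_eq)
  have c1: "c1 \<in> F" using F0ne by (simp add: c1_def F_def some_in_eq)
  define l where "l = (\<lambda>v. G *v (v - (v \<bullet> m0) *\<^sub>R m0) + (v \<bullet> m0) *\<^sub>R m)"
  define c where "c = G *v ((c0 \<bullet> m0) *\<^sub>R m0) + b - (c0 \<bullet> m0) *\<^sub>R m"
  have lin: "linear l"
    unfolding linear_iff l_def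
    by (auto simp: inner_add_left matrix_vector_mult_diff_distrib matrix_vector_right_distrib
        matrix_vector_mult_scaleR algebra_simps)
  have Lx: "l x + c = G *v (x - ((x - c0) \<bullet> m0) *\<^sub>R m0) + b + ((x - c0) \<bullet> m0) *\<^sub>R m" for x
    by (simp add: l_def c_def inner_diff_left scaleR_diff_left matrix_vector_mult_diff_distrib algebra_simps)
  have mm: "m0 \<bullet> m0 = 1" "m \<bullet> m = 1" using n0 n by (simp_all add: m0_def m_def F_def)
  have inj: "inj l"
  proof (rule linear_injective_0[OF lin, THEN iffD2], intro allI impI)
    fix v assume lv: "l v = 0"
    define w where "w = v - (v \<bullet> m0) *\<^sub>R m0"
    have "m \<bullet> (G *v w) = lam * (m0 \<bullet> w)"
      by (simp only: inner_mat lam(1)[folded F_def m_def m0_def] inner_scaleR_left)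
    also have "m0 \<bullet> w = 0" by (simp add: w_def inner_diff_right mm inner_commute)
    finally have "m \<bullet> (G *v w) = 0" by simp
    moreover have "m \<bullet> l v = m \<bullet> (G *v w) + (v \<bullet> m0)" by (simp add: l_def w_def inner_add_right mm)
    ultimately have vm: "v \<bullet> m0 = 0" using lv by simp
    then have "G *v v = 0" using lv by (simp add: l_def)
    then show "v = 0" using inj_matrix_vector_mult[OF G] by (metis injD matrix_vector_mult_0_right)
  qed
  have key: "(y + t *\<^sub>R m0 - c0) \<bullet> m0 = t" if "y \<in> F0" for y t
  proof -
    have "(y - c0) \<bullet> m0 = 0" using n0F[OF that c0] by (simp add: m0_def inner_commute)
    then show ?thesis by (simp add: inner_diff_left inner_add_left mm algebra_simps)
  qed
  have Lyt: "l (y + t *\<^sub>R m0) + c = \<psi> y + t *\<^sub>R m" if "y \<in> F0" for y t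
    using key[OF that, of t] by (simp add: Lx \<psi>_def)
  have key2: "(\<psi> y + t *\<^sub>R m - c1) \<bullet> m = t" if "y \<in> F0" for y t
  proof -
    have "(\<psi> y - c1) \<bullet> m = 0" using nF[of "\<psi> y" c1] that c1 by (simp add: m_def F_def inner_commute)
    then show ?thesis by (simp add: inner_diff_left inner_add_left mm algebra_simps)
  qed
  have img: "(\<lambda>x. l x + c) ` facet_prism F0 = facet_prism F"
  proof
    show "(\<lambda>x. l x + c) ` facet_prism F0 \<subseteq> facet_prism F"
      using Lyt by (force simp: facet_prism_def F_def m_def[unfolded F_def] m0_def)
    show "facet_prism F \<subseteq> (\<lambda>x. l x + c) ` facet_prism F0"
    proof
      fix z assume "z \<in> facet_prism F"
      then obtain y t where yt: "y \<in> F0" "t \<in> {0..1}" "z = \<psi> y + t *\<^sub>R m"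
        by (auto simp: facet_prism_def F_def m_def)
      then have "z = l (y + t *\<^sub>R m0) + c" using Lyt by simp
      moreover have "y + t *\<^sub>R m0 \<in> facet_prism F0" using yt by (auto simp: facet_prism_def m0_def)
      ultimately show "z \<in> (\<lambda>x. l x + c) ` facet_prism F0" by blast
    qed
  qed
  have proj: "facet_proj F (l x + c) = \<psi> (facet_proj F0 x)" if xin: "x \<in> facet_prism F0" for x
  proof -
    obtain y t where yt: "y \<in> F0" "x = y + t *\<^sub>R m0" using xin unfolding facet_prism_def m0_def by blast
    have "facet_proj F0 x = y" using key[OF yt(1), of t] yt(2)
      by (simp add: facet_proj_def Let_def c0_def[symmetric] m0_def[symmetric])
    moreover have "facet_proj F (l x + c) = \<psi> y" using Lyt[OF yt(1), of t] key2[OF yt(1), of t] yt(2)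
      by (simp add: facet_proj_def Let_def c1_def[symmetric] m_def[symmetric])
    ultimately show ?thesis by simp
  qed
  show ?thesis using lin inj img proj unfolding F_def by blast
qed

lemma absint_cong: "(\<And>x. x \<in> S \<Longrightarrow> f x = g x) \<Longrightarrow> f absolutely_integrable_on S \<Longrightarrow> g absolutely_integrable_on S"
proof -
  assume eq: "\<And>x. x \<in> S \<Longrightarrow> f x = g x" and f: "f absolutely_integrable_on S"
  have "(\<lambda>x. if x \<in> S then f x else 0) = (\<lambda>x. if x \<in> S then g x else 0)" using eq by auto
  then show ?thesis using f absolutely_integrable_restrict_UNIV[of S f] absolutely_integrable_restrict_UNIV[of S g] by simp
qed

lemma absint_cont_mult:
  fixes f g :: "real^'n \<Rightarrow> real"
  assumes S: "compact S" and g: "continuous_on S g" and f: "f absolutely_integrable_on S"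
  shows "(\<lambda>x. g x * f x) absolutely_integrable_on S"
proof -
  have S': "S \<in> sets lebesgue" using lmeasurable_compact[OF S] by blast
  have gm: "g \<in> borel_measurable (lebesgue_on S)" using continuous_imp_measurable_on_sets_lebesgue[OF g S'] .
  have gb: "bounded (g ` S)" using compact_continuous_image[OF g S] compact_imp_bounded by blast
  show ?thesis
    using absolutely_integrable_bounded_measurable_product[OF bilinear_times gm S' gb f] by simp
qed

lemma absint_cont:
  fixes g :: "real^'n \<Rightarrow> real"
  assumes S: "compact S" and g: "continuous_on S g"
  shows "g absolutely_integrable_on S"
  using absint_cont_mult[OF S g absolutely_integrable_on_const[OF lmeasurable_compact[OF S], of 1]] by simp

lemma frob_absint:
  fixes \<rho> B :: "real^'n \<Rightarrow> real^'n^'n"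
  assumes S: "compact S" and \<rho>: "\<And>i j. (\<lambda>x. \<rho> x $ i $ j) absolutely_integrable_on S"
    and B: "\<And>i j. continuous_on S (\<lambda>x. B x $ i $ j)"
  shows "(\<lambda>x. frob (\<rho> x) (B x)) absolutely_integrable_on S"
  unfolding frob_def
proof (rule absolutely_integrable_sum, simp, rule absolutely_integrable_sum, simp)
  fix i j
  show "(\<lambda>x. \<rho> x $ i $ j * B x $ i $ j) absolutely_integrable_on S"
    using absint_cont_mult[OF S B \<rho>, of i j i j] by (simp add: mult.commute)
qed

lemma absint_lincomb:
  fixes \<rho> :: "real^'n \<Rightarrow> real^'n^'n"
  assumes \<rho>: "\<And>i j. (\<lambda>x. \<rho> x $ i $ j) absolutely_integrable_on S"
  shows "(\<lambda>x. \<Sum>k\<in>UNIV. \<Sum>l\<in>UNIV. a k l * \<rho> x $ k $ l) absolutely_integrable_on S"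
  by (rule absolutely_integrable_sum, simp, rule absolutely_integrable_sum, simp, rule set_integrable_mult_right, rule \<rho>)

lemma compact_prism:
  assumes "compact F" shows "compact (facet_prism F)"
proof -
  have "facet_prism F = (\<lambda>p. fst p + snd p *\<^sub>R facet_normal F) ` (F \<times> {0..1})"
    unfolding facet_prism_def by (auto simp: image_iff; force)
  also have "compact \<dots>"
    by (intro compact_continuous_image compact_Times assms compact_Icc continuous_intros)
  finally show ?thesis .
qed

lemma cont_proj: "continuous_on S (facet_proj F)"
  unfolding facet_proj_def Let_def by (intro continuous_intros)

lemma poly_mat_cont: "poly_mat k \<tau> \<Longrightarrow> continuous_on S (\<lambda>x. \<tau> x $ i $ j)"
  unfolding poly_mat_def using poly_deg_cont by blast

lemma poly_vec_cont: "poly_vec k q \<Longrightarrow> continuous_on S (\<lambda>x. q x $ i)"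
  unfolding poly_vec_def using poly_deg_cont by blast

lemma admissible_diff_poly:
  assumes K: "compact K" "convex K" and \<sigma>: "admissible K \<sigma>" and \<tau>: "poly_mat k \<tau>"
  shows "admissible K (\<lambda>x. \<sigma> x - \<tau> x)"
  unfolding admissible_def
proof (intro conjI allI impI)
  fix i j
  have "(\<lambda>x. \<tau> x $ i $ j) absolutely_integrable_on K" by (rule absint_cont[OF K(1) poly_mat_cont[OF \<tau>]])
  then show "(\<lambda>x. (\<sigma> x - \<tau> x) $ i $ j) absolutely_integrable_on K"
    using \<sigma> by (auto simp: admissible_def)
next
  fix F i j assume F: "F facet_of K"
  have cF: "compact F" using face_of_imp_compact[OF K(2) K(1) facet_of_imp_face_of[OF F]] .
  have "continuous_on (facet_prism F) (\<lambda>x. \<tau> (facet_proj F x) $ i $ j)"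
    using continuous_on_compose2[OF poly_mat_cont[OF \<tau>, of UNIV i j] cont_proj[of "facet_prism F" F]] by auto
  then have "(\<lambda>x. \<tau> (facet_proj F x) $ i $ j) absolutely_integrable_on facet_prism F"
    by (rule absint_cont[OF compact_prism[OF cF]])
  then show "(\<lambda>x. (\<sigma> (facet_proj F x) - \<tau> (facet_proj F x)) $ i $ j) absolutely_integrable_on facet_prism F"
    using \<sigma> F by (auto simp: admissible_def)
qed

section \<open>Transfer\<close>

definition TR :: "real^'n^'n \<Rightarrow> real^'n \<Rightarrow> real \<Rightarrow> (real^'n \<Rightarrow> real^'n^'n) \<Rightarrow> (real^'n \<Rightarrow> real^'n^'n)" where
  "TR G b c \<rho> = (\<lambda>x. c *\<^sub>R (transpose G ** \<rho> (G *v x + b) ** matrix_inv (transpose G)))"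

lemma TR_entry: "TR G b c \<rho> x $ i $ j =
   (\<Sum>k\<in>UNIV. \<Sum>l\<in>UNIV. (c * transpose G $ i $ k * matrix_inv (transpose G) $ l $ j) * \<rho> (G *v x + b) $ k $ l)"
  by (simp only: TR_def mat_entry3_scale)

lemma mm_diff_l: "(A::real^'n^'n) ** (B - C) = A ** B - A ** C"
  by (simp add: vec_eq_iff matrix_matrix_mult_def sum_subtractf right_diff_distrib)

lemma mm_diff_r: "((B::real^'n^'n) - C) ** A = B ** A - C ** A"
  by (simp add: vec_eq_iff matrix_matrix_mult_def sum_subtractf left_diff_distrib)

lemma TR_diff: "TR G b c (\<lambda>x. \<sigma> x - \<tau> x) = (\<lambda>x. TR G b c \<sigma> x - TR G b c \<tau> x)"
  by (simp add: TR_def fun_eq_iff mm_diff_l mm_diff_r scaleR_diff_right)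

lemma facet_data:
  fixes G :: "real^'n^'n" and K0 :: "(real^'n) set" and b :: "real^'n"
  assumes G: "invertible G" and F0: "F0 facet_of K0" and K0: "aff_dim K0 = int CARD('n)"
  shows "(\<lambda>x. G *v x + b) ` F0 facet_of (\<lambda>x. G *v x + b) ` K0"
    "facet_normal F0 \<bullet> facet_normal F0 = 1"
    "\<And>x y. x \<in> F0 \<Longrightarrow> y \<in> F0 \<Longrightarrow> facet_normal F0 \<bullet> (x - y) = 0"
    "facet_normal ((\<lambda>x. G *v x + b) ` F0) \<bullet> facet_normal ((\<lambda>x. G *v x + b) ` F0) = 1"
    "\<And>x y. x \<in> (\<lambda>x. G *v x + b) ` F0 \<Longrightarrow> y \<in> (\<lambda>x. G *v x + b) ` F0 \<Longrightarrow>
        facet_normal ((\<lambda>x. G *v x + b) ` F0) \<bullet> (x - y) = 0"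
    "\<exists>lam. lam \<noteq> 0 \<and> transpose G *v facet_normal ((\<lambda>x. G *v x + b) ` F0) = lam *\<^sub>R facet_normal F0"
proof -
  define \<psi> where "\<psi> = (\<lambda>x. G *v x + b)"
  have F: "\<psi> ` F0 facet_of \<psi> ` K0" unfolding \<psi>_def by (rule facet_affine_image[OF G F0])
  have K: "aff_dim (\<psi> ` K0) = int CARD('n)" unfolding \<psi>_def by (simp add: aff_dim_affine_image[OF G] K0)
  note p0 = facet_normal_props[OF F0 K0]
  note p1 = facet_normal_props[OF F K]
  show "(\<lambda>x. G *v x + b) ` F0 facet_of (\<lambda>x. G *v x + b) ` K0" using F by (simp add: \<psi>_def)
  show "facet_normal F0 \<bullet> facet_normal F0 = 1" using p0(1) by (simp add: norm_eq_1)
  show "\<And>x y. x \<in> F0 \<Longrightarrow> y \<in> F0 \<Longrightarrow> facet_normal F0 \<bullet> (x - y) = 0" by (rule p0(2))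
  show "facet_normal ((\<lambda>x. G *v x + b) ` F0) \<bullet> facet_normal ((\<lambda>x. G *v x + b) ` F0) = 1"
    using p1(1) by (simp add: norm_eq_1 \<psi>_def)
  show "\<And>x y. x \<in> (\<lambda>x. G *v x + b) ` F0 \<Longrightarrow> y \<in> (\<lambda>x. G *v x + b) ` F0 \<Longrightarrow>
        facet_normal ((\<lambda>x. G *v x + b) ` F0) \<bullet> (x - y) = 0" using p1(2) by (simp add: \<psi>_def)
  define n where "n = facet_normal (\<psi> ` F0)"
  define m where "m = transpose G *v n"
  have morth: "m \<bullet> (x - y) = 0" if "x \<in> F0" "y \<in> F0" for x y
  proof -
    have "m \<bullet> (x - y) = n \<bullet> (G *v (x - y))" by (simp add: m_def inner_mat)
    also have "G *v (x - y) = \<psi> x - \<psi> y" by (simp add: \<psi>_def matrix_vector_mult_diff_distrib)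
    also have "n \<bullet> (\<psi> x - \<psi> y) = 0" using p1(2) that by (simp add: n_def)
    finally show ?thesis .
  qed
  have meq: "m = (m \<bullet> facet_normal F0) *\<^sub>R facet_normal F0"
    by (rule facet_normal_unique[OF F0 K0 p0(1) p0(2) morth])
  have "m \<noteq> 0"
  proof
    assume "m = 0"
    then have "n = 0" using inj_matrix_vector_mult[OF invertible_transpose'[OF G]]
      by (metis m_def injD matrix_vector_mult_0_right)
    then show False using p1(1) by (simp add: n_def)
  qed
  then have "m \<bullet> facet_normal F0 \<noteq> 0" using meq by (metis scale_zero_left)
  then show "\<exists>lam. lam \<noteq> 0 \<and> transpose G *v facet_normal ((\<lambda>x. G *v x + b) ` F0) = lam *\<^sub>R facet_normal F0"
    using meq by (auto simp: m_def n_def \<psi>_def)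
qed

lemma nt_relation:
  fixes G :: "real^'n^'n"
  assumes G: "invertible G" and n0: "n0 \<bullet> n0 = 1" and lam: "lam \<noteq> 0" "transpose G *v n = lam *\<^sub>R n0"
  shows "\<exists>L. \<forall>A. ntv n0 (c *\<^sub>R (transpose G ** A ** matrix_inv (transpose G))) = L *v ntv n A"
proof -
  obtain P :: "real^'n^'n" where P: "\<And>v. P *v v = v - (n0 \<bullet> v) *\<^sub>R n0" using Pmat_ex by blast
  have "ntv n0 (c *\<^sub>R (transpose G ** A ** matrix_inv (transpose G))) = ((c / lam) *\<^sub>R (P ** transpose G)) *v ntv n A" for A
    using ntv_transform[OF invertible_transpose'[OF G] n0 lam(2) lam(1), of c A]
    by (simp only: P[symmetric] scaleR_matrix_vector_assoc[symmetric] matrix_vector_mul_assoc)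
  then show ?thesis by blast
qed

lemma poly_deg_TR:
  assumes "poly_mat k \<tau>"
  shows "poly_deg k (\<lambda>x. TR G b c \<tau> x $ i $ j)"
  unfolding TR_entry
  by (intro poly_deg_sum poly_deg_scale poly_deg_comp[OF _ poly_deg_affine]
      assms[unfolded poly_mat_def, rule_format]) simp_all

lemma poly_vec_lin0:
  assumes q: "poly_vec k q" and A: "\<And>i. poly_deg 1 (\<lambda>x. A x $ i)"
  shows "poly_vec k (\<lambda>x. (L::real^'n^'n) *v q (A x))"
  unfolding poly_vec_def
proof
  fix i
  have "poly_deg k (\<lambda>x. \<Sum>j\<in>UNIV. L $ i $ j * q (A x) $ j)"
  proof (rule poly_deg_sum)
    fix j show "poly_deg k (\<lambda>x. L $ i $ j * q (A x) $ j)"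
      by (rule poly_deg_scale, rule poly_deg_comp[OF _ A]) (use q in \<open>simp add: poly_vec_def\<close>)
  qed simp
  then show "poly_deg k (\<lambda>x. (L *v q (A x)) $ i)" by (simp only: matrix_vector_mult_def vec_lambda_beta)
qed

lemma poly_vec_lin: "poly_vec k q \<Longrightarrow> poly_vec k (\<lambda>x. (L::real^'n^'n) *v q ((M::real^'n^'n) *v x + b))"
  using poly_vec_lin0[of k q "\<lambda>x. M *v x + b" L] poly_deg_affine by blast

lemma Sigma_transfer:
  fixes G :: "real^'n^'n" and K0 :: "(real^'n) set"
  assumes G: "invertible G" and K0: "aff_dim K0 = int CARD('n)"
    and \<tau>: "\<tau> \<in> Sigma k ((\<lambda>x. G *v x + b) ` K0)"
  shows "TR G b c \<tau> \<in> Sigma k K0"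
proof -
  have pm: "poly_mat k \<tau>" using \<tau> by (simp add: Sigma_def)
  have "poly_mat k (TR G b c \<tau>)" unfolding poly_mat_def using poly_deg_TR[OF pm] by blast
  moreover have "trace (TR G b c \<tau> x) = 0" for x
    using \<tau> by (simp add: TR_def trace_transform[OF invertible_transpose'[OF G]] Sigma_def)
  moreover have "\<exists>q. poly_vec (k - 1) q \<and> (\<forall>x\<in>F0. nt F0 (TR G b c \<tau> x) = q x)" if F0: "F0 facet_of K0" for F0
  proof -
    note fd0 = facet_data[OF G F0 K0]
  note fd = fd0(1)[where b=b] fd0(2) fd0(3) fd0(4)[where b=b] fd0(5)[where b=b] fd0(6)[where b=b]
    obtain lam where lam: "lam \<noteq> 0" "transpose G *v facet_normal ((\<lambda>x. G *v x + b) ` F0) = lam *\<^sub>R facet_normal F0"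
      using fd(6) by blast
    obtain L where L: "\<And>A. ntv (facet_normal F0) (c *\<^sub>R (transpose G ** A ** matrix_inv (transpose G)))
        = L *v ntv (facet_normal ((\<lambda>x. G *v x + b) ` F0)) A"
      using nt_relation[OF G fd(2) lam] by blast
    obtain q where q: "poly_vec (k - 1) q" "\<forall>x\<in>(\<lambda>x. G *v x + b) ` F0. nt ((\<lambda>x. G *v x + b) ` F0) (\<tau> x) = q x"
      using \<tau> fd(1) by (auto simp: Sigma_def)
    have "nt F0 (TR G b c \<tau> x) = L *v q (G *v x + b)" if "x \<in> F0" for x
      using q(2) that by (simp add: TR_def nt_ntv L)
    then show ?thesis using poly_vec_lin[OF q(1), of L G b] by blast
  qed
  ultimately show ?thesis by (simp add: Sigma_def)
qed

lemma admissible_transfer: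
  fixes G :: "real^'n^'n" and K0 :: "(real^'n) set"
  assumes ok: "cov_ok TYPE('n)" and G: "invertible G" and K0: "aff_dim K0 = int CARD('n)"
    and \<rho>: "admissible ((\<lambda>x. G *v x + b) ` K0) \<rho>"
  shows "admissible K0 (TR G b c \<rho>)"
  unfolding admissible_def
proof (intro conjI allI impI)
  have lin: "linear ((*v) G)" "inj ((*v) G)" by (simp_all add: matrix_vector_mul_linear inj_matrix_vector_mult[OF G])
  fix i j
  have "(\<lambda>x. \<rho> (G *v x + b) $ k $ l) absolutely_integrable_on K0" for k l
    using cov_rev[OF ok lin, where f="\<lambda>y. \<rho> y $ k $ l" and b=b and S=K0] \<rho> by (auto simp: admissible_def)
  then show "(\<lambda>x. TR G b c \<rho> x $ i $ j) absolutely_integrable_on K0"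
    unfolding TR_entry by (rule absint_lincomb)
next
  fix F0 i j assume F0: "F0 facet_of K0"
  note fd0 = facet_data[OF G F0 K0]
  note fd = fd0(1)[where b=b] fd0(2) fd0(3) fd0(4)[where b=b] fd0(5)[where b=b] fd0(6)[where b=b]
  obtain lam where lam: "lam \<noteq> 0" "transpose G *v facet_normal ((\<lambda>x. G *v x + b) ` F0) = lam *\<^sub>R facet_normal F0"
    using fd(6) by blast
  have F0ne: "F0 \<noteq> {}" using F0 by (simp add: facet_of_def)
  obtain l' c' where pm: "linear l'" "inj l'" "(\<lambda>x. l' x + c') ` facet_prism F0 = facet_prism ((\<lambda>x. G *v x + b) ` F0)"
    "\<forall>x\<in>facet_prism F0. facet_proj ((\<lambda>x. G *v x + b) ` F0) (l' x + c') = G *v facet_proj F0 x + b"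
    using prism_map[OF G F0ne fd(2) fd(3) fd(4) fd(5) lam(2) lam(1)] by blast
  have "(\<lambda>x. \<rho> (G *v facet_proj F0 x + b) $ k $ l) absolutely_integrable_on facet_prism F0" for k l
  proof -
    have "(\<lambda>z. \<rho> (facet_proj ((\<lambda>x. G *v x + b) ` F0) z) $ k $ l) absolutely_integrable_on facet_prism ((\<lambda>x. G *v x + b) ` F0)"
      using \<rho> fd(1) by (auto simp: admissible_def)
    then have "(\<lambda>x. \<rho> (facet_proj ((\<lambda>x. G *v x + b) ` F0) (l' x + c')) $ k $ l) absolutely_integrable_on facet_prism F0"
      using cov_rev[OF ok pm(1) pm(2), where f="\<lambda>z. \<rho> (facet_proj ((\<lambda>x. G *v x + b) ` F0) z) $ k $ l" and b=c' and S="facet_prism F0"]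
      pm(3) by simp
    then show ?thesis by (rule absint_cong[rotated]) (simp add: pm(4))
  qed
  then show "(\<lambda>x. TR G b c \<rho> (facet_proj F0 x) $ i $ j) absolutely_integrable_on facet_prism F0"
    unfolding TR_entry by (rule absint_lincomb)
qed

lemma inner_transpose_mv: "((L::real^'n^'n) *v u) \<bullet> w = u \<bullet> (transpose L *v w)"
  by (simp add: dot_lmul_matrix[symmetric] inner_commute)

lemma poly_vec_cont_vec: "poly_vec k q \<Longrightarrow> continuous_on S q"
proof -
  assume q: "poly_vec k q"
  have "continuous_on S (\<lambda>x. \<chi> i. q x $ i)"
    by (intro continuous_on_vec_lambda poly_vec_cont[OF q])
  then show ?thesis by simp
qed

lemma poly_deg_mat3:
  assumes "poly_mat k \<eta>"
  shows "poly_deg k (\<lambda>x. (B ** \<eta> (M *v x + d) ** C :: real^'n^'n) $ i $ j)"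
  unfolding mat_entry3
  by (intro poly_deg_sum poly_deg_scale poly_deg_comp[OF _ poly_deg_affine]
      assms[unfolded poly_mat_def, rule_format]) simp_all

lemma dofs_transfer:
  fixes G FK0 FK :: "real^'n^'n" and K0 :: "(real^'n) set" and b bK bK0 :: "real^'n"
  assumes ok: "cov_ok TYPE('n)" and G: "invertible G" and c: "c \<noteq> 0"
    and K0: "compact K0" "convex K0" "aff_dim K0 = int CARD('n)"
    and FK: "FK = G ** FK0" and FK0: "invertible FK0" and bK0: "bK0 = matrix_inv G *v (bK - b)"
    and \<rho>: "admissible ((\<lambda>x. G *v x + b) ` K0) \<rho>"
    and dv: "dofs_vanish k ((\<lambda>x. G *v x + b) ` K0) FK bK \<rho>"
  shows "dofs_vanish k K0 FK0 bK0 (TR G b c \<rho>)"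
  unfolding dofs_vanish_def
proof (intro conjI allI impI ballI)
  define \<psi> where "\<psi> = (\<lambda>x. G *v x + b)"
  have linG: "linear ((*v) G)" "inj ((*v) G)" by (simp_all add: matrix_vector_mul_linear inj_matrix_vector_mult[OF G])
  fix F0 :: "(real^'n) set" and r0 :: "real^'n \<Rightarrow> real^'n"
  assume F0: "F0 facet_of K0" and r0: "poly_vec (k - 1) r0"
  note fd0 = facet_data[OF G F0 K0(3)]
  note fd = fd0(1)[where b=b] fd0(2) fd0(3) fd0(4)[where b=b] fd0(5)[where b=b] fd0(6)[where b=b]
  define F where "F = \<psi> ` F0"
  obtain lam where lam: "lam \<noteq> 0" "transpose G *v facet_normal F = lam *\<^sub>R facet_normal F0"
    using fd(6) by (auto simp: F_def \<psi>_def)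
  obtain L where L: "\<And>A. ntv (facet_normal F0) (c *\<^sub>R (transpose G ** A ** matrix_inv (transpose G)))
        = L *v ntv (facet_normal F) A"
    using nt_relation[OF G fd(2) lam(1) lam(2)] by blast
  have F0ne: "F0 \<noteq> {}" using F0 by (simp add: facet_of_def)
  obtain l' c' where pm: "linear l'" "inj l'" "(\<lambda>x. l' x + c') ` facet_prism F0 = facet_prism F"
    "\<forall>x\<in>facet_prism F0. facet_proj F (l' x + c') = \<psi> (facet_proj F0 x)"
    using prism_map[OF G F0ne fd(2) fd(3) fd(4) fd(5) lam(2)[unfolded F_def \<psi>_def] lam(1)]
    unfolding F_def \<psi>_def by blast
  have cF0: "compact F0" using face_of_imp_compact[OF K0(2) K0(1) facet_of_imp_face_of[OF F0]] .
  have cF: "compact F" unfolding F_def \<psi>_def by (rule compact_affine_image[OF cF0])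
  define r where "r = (\<lambda>z. transpose L *v r0 (matrix_inv G *v z + (- (matrix_inv G *v b))))"
  have rpoly: "poly_vec (k - 1) r" unfolding r_def by (rule poly_vec_lin[OF r0])
  have Ffacet: "F facet_of \<psi> ` K0" using fd(1) by (simp add: F_def \<psi>_def)
  define g where "g = (\<lambda>z. nt F (\<rho> z) \<bullet> r z)"
  have hyp: "facet_integral F g = 0"
    using dv Ffacet rpoly by (simp add: dofs_vanish_def g_def \<psi>_def)
  have gabs: "(\<lambda>z. g (facet_proj F z)) absolutely_integrable_on facet_prism F"
  proof -
    have "(\<lambda>z. frob (\<rho> (facet_proj F z)) (Nmat (facet_normal F) (r (facet_proj F z))))
           absolutely_integrable_on facet_prism F"
    proof (rule frob_absint[OF compact_prism[OF cF]])
      show "(\<lambda>x. \<rho> (facet_proj F x) $ i $ j) absolutely_integrable_on facet_prism F" for i j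
        using \<rho> Ffacet by (auto simp: admissible_def \<psi>_def)
      have rc: "continuous_on (facet_prism F) (\<lambda>z. r (facet_proj F z))"
        using continuous_on_compose2[OF poly_vec_cont_vec[OF rpoly, of UNIV] cont_proj] by auto
      show "continuous_on (facet_prism F) (\<lambda>x. Nmat (facet_normal F) (r (facet_proj F x)) $ i $ j)" for i j
      proof -
        have "continuous_on (facet_prism F) (\<lambda>x. r (facet_proj F x) $ i * facet_normal F $ j
             - (facet_normal F \<bullet> r (facet_proj F x)) * facet_normal F $ i * facet_normal F $ j)"
          by (intro continuous_on_diff continuous_on_mult continuous_on_const continuous_on_component
              continuous_on_inner rc)
        then show ?thesis by (simp add: Nmat_def)
      qed
    qed
    then show ?thesis by (simp add: g_def nt_ntv ntv_inner)
  qed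
  obtain C where C: "C > 0" "\<forall>(f::real^'n \<Rightarrow> real) S.
     (f absolutely_integrable_on ((\<lambda>x. l' x + c') ` S) \<longleftrightarrow> (\<lambda>x. f (l' x + c')) absolutely_integrable_on S) \<and>
     ((\<lambda>x. f (l' x + c')) absolutely_integrable_on S \<longrightarrow>
        integral ((\<lambda>x. l' x + c') ` S) f = C * integral S (\<lambda>x. f (l' x + c')))"
    using cov_full[OF ok pm(1) pm(2), of c'] by blast
  note C2 = C(2)[rule_format, where f="\<lambda>z. g (facet_proj F z)" and S="facet_prism F0"]
  have gabs': "(\<lambda>x. g (facet_proj F (l' x + c'))) absolutely_integrable_on facet_prism F0"
    using C2 gabs pm(3) by simp
  have ident: "g (\<psi> y) = nt F0 (TR G b c \<rho> y) \<bullet> r0 y" for y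
  proof -
    have "matrix_inv G *v (G *v y + b) + - (matrix_inv G *v b) = y"
      by (simp add: matrix_vector_right_distrib minv_vec1[OF G])
    then have "r (\<psi> y) = transpose L *v r0 y" by (simp add: r_def \<psi>_def)
    then have "g (\<psi> y) = (L *v nt F (\<rho> (\<psi> y))) \<bullet> r0 y"
      by (simp add: g_def inner_transpose_mv)
    also have "\<dots> = nt F0 (TR G b c \<rho> y) \<bullet> r0 y"
      by (simp add: TR_def nt_ntv L \<psi>_def)
    finally show ?thesis .
  qed
  have "facet_integral F g = integral ((\<lambda>x. l' x + c') ` facet_prism F0) (\<lambda>z. g (facet_proj F z))"
    by (simp add: facet_integral_def pm(3))
  also have "\<dots> = C * integral (facet_prism F0) (\<lambda>x. g (facet_proj F (l' x + c')))"
    using C2 gabs' by simp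
  also have "integral (facet_prism F0) (\<lambda>x. g (facet_proj F (l' x + c')))
      = integral (facet_prism F0) (\<lambda>x. nt F0 (TR G b c \<rho> (facet_proj F0 x)) \<bullet> r0 (facet_proj F0 x))"
    by (rule integral_cong) (simp add: pm(4) ident)
  finally have "C * facet_integral F0 (\<lambda>x. nt F0 (TR G b c \<rho> x) \<bullet> r0 x) = 0"
    using hyp by (simp add: facet_integral_def)
  then show "facet_integral F0 (\<lambda>x. nt F0 (TR G b c \<rho> x) \<bullet> r0 x) = 0" using C(1) by simp
next
  fix \<eta> assume \<eta>: "\<eta> \<in> Bubble k (ref_simplex :: (real^'n) set)"
  have \<eta>p: "poly_mat k \<eta>" using \<eta> by (simp add: Bubble_def Sigma_def)
  have linG: "linear ((*v) G)" "inj ((*v) G)" by (simp_all add: matrix_vector_mul_linear inj_matrix_vector_mult[OF G])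
  define h where "h = (\<lambda>x. frob (\<rho> x) (FK ** \<eta> (matrix_inv FK *v (x - bK)) ** matrix_inv FK))"
  have hyp: "integral ((\<lambda>x. G *v x + b) ` K0) h = 0" using dv \<eta> by (simp add: dofs_vanish_def h_def)
  have cK: "compact ((\<lambda>x. G *v x + b) ` K0)" by (rule compact_affine_image[OF K0(1)])
  have habs: "h absolutely_integrable_on ((\<lambda>x. G *v x + b) ` K0)"
    unfolding h_def
  proof (rule frob_absint[OF cK])
    show "(\<lambda>x. \<rho> x $ i $ j) absolutely_integrable_on (\<lambda>x. G *v x + b) ` K0" for i j
      using \<rho> by (simp add: admissible_def)
    have e: "matrix_inv FK *v (x - bK) = matrix_inv FK *v x + (- (matrix_inv FK *v bK))" for x
      by (simp add: matrix_vector_mult_diff_distrib)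
    show "continuous_on ((\<lambda>x. G *v x + b) ` K0) (\<lambda>x. (FK ** \<eta> (matrix_inv FK *v (x - bK)) ** matrix_inv FK) $ i $ j)" for i j
      unfolding e by (rule poly_deg_cont[OF poly_deg_mat3[OF \<eta>p]])
  qed
  obtain C where C: "C > 0" "\<forall>(f::real^'n \<Rightarrow> real) S.
     (f absolutely_integrable_on ((\<lambda>x. G *v x + b) ` S) \<longleftrightarrow> (\<lambda>x. f (G *v x + b)) absolutely_integrable_on S) \<and>
     ((\<lambda>x. f (G *v x + b)) absolutely_integrable_on S \<longrightarrow>
        integral ((\<lambda>x. G *v x + b) ` S) f = C * integral S (\<lambda>x. f (G *v x + b)))"
    using cov_full[OF ok linG, of b] by blast
  note C2 = C(2)[rule_format, where f=h and S=K0]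
  have "C * integral K0 (\<lambda>x. h (G *v x + b)) = 0" using C2 habs hyp by simp
  then have I0: "integral K0 (\<lambda>x. h (G *v x + b)) = 0" using C(1) by simp
  have minvFK: "matrix_inv FK = matrix_inv FK0 ** matrix_inv G" using minv_mult[OF G FK0] FK by simp
  have pt: "frob (TR G b c \<rho> y) (FK0 ** \<eta> (matrix_inv FK0 *v (y - bK0)) ** matrix_inv FK0) = c * h (G *v y + b)" for y
  proof -
    have arg: "(matrix_inv FK0 ** matrix_inv G) *v (G *v y + b - bK) = matrix_inv FK0 *v (y - bK0)"
      by (simp add: bK0 matrix_vector_mul_assoc[symmetric] matrix_vector_mult_diff_distrib
          matrix_vector_right_distrib minv_vec1[OF G] algebra_simps)
    have tr: "transpose (matrix_inv (transpose G)) = matrix_inv G"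
      by (simp add: minv_transpose[OF G] transpose_transpose)
    show ?thesis
      unfolding TR_def frob_transform h_def minvFK arg tr transpose_transpose
      by (simp add: FK minvFK matrix_mul_assoc)
  qed
  show "integral K0 (\<lambda>x. frob (TR G b c \<rho> x) (FK0 ** \<eta> (matrix_inv FK0 *v (x - bK0)) ** matrix_inv FK0)) = 0"
    by (simp add: pt I0)
qed

lemma cov_ok_of_bij: "bij (p :: 'm::{finite,wellorder} \<Rightarrow> 'n::finite) \<Longrightarrow> cov_ok TYPE('n)"
  unfolding cov_ok_def using cov_affine_perm by blast

lemma cov_ok_dim: "CARD('n::finite) = 2 \<or> CARD('n) = 3 \<Longrightarrow> cov_ok TYPE('n)"
proof -
  assume "CARD('n) = 2 \<or> CARD('n) = 3"
  then show ?thesis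
  proof
    assume c: "CARD('n) = 2"
    obtain p :: "2 \<Rightarrow> 'n" where "bij_betw p UNIV UNIV"
      using finite_same_card_bij[of "UNIV :: 2 set" "UNIV :: 'n set"] c by auto
    then show ?thesis by (intro cov_ok_of_bij[of p])
  next
    assume c: "CARD('n) = 3"
    obtain p :: "3 \<Rightarrow> 'n" where "bij_betw p UNIV UNIV"
      using finite_same_card_bij[of "UNIV :: 3 set" "UNIV :: 'n set"] c by auto
    then show ?thesis by (intro cov_ok_of_bij[of p])
  qed
qed

lemma mm_scale_r: "(X::real^'n^'n) ** (k *\<^sub>R Y) = k *\<^sub>R (X ** Y)"
  by (simp add: matrix_scalar_ac scalar_matrix_assoc)

lemma mm_scale_l: "(k *\<^sub>R (X::real^'n^'n)) ** Y = k *\<^sub>R (X ** Y)"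
  by (simp add: scalar_matrix_assoc)

lemma TR_inv1:
  assumes G: "invertible (G::real^'n^'n)" and c: "c \<noteq> 0"
  shows "TR G b c (TR (matrix_inv G) (- (matrix_inv G *v b)) (1 / c) \<tau>) = \<tau>"
proof
  fix x
  define H where "H = matrix_inv (transpose G)"
  have GT: "invertible (transpose G)" by (rule invertible_transpose'[OF G])
  have e1: "matrix_inv G *v (G *v x + b) + - (matrix_inv G *v b) = x"
    by (simp add: matrix_vector_right_distrib minv_vec1[OF G])
  have e2: "transpose (matrix_inv G) = H" by (simp add: H_def minv_transpose[OF G])
  have e3: "matrix_inv H = transpose G" by (simp add: H_def minv_minv[OF GT])
  have r1: "transpose G ** H = mat 1" by (simp add: H_def minv[OF GT])
  have r2: "Y ** transpose G ** H = Y" for Y :: "real^'n^'n"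
    by (simp add: matrix_mul_assoc[symmetric] r1)
  show "TR G b c (TR (matrix_inv G) (- (matrix_inv G *v b)) (1 / c) \<tau>) x = \<tau> x"
    unfolding TR_def e1 e2 e3 H_def[symmetric]
    using c by (simp add: mm_scale_r mm_scale_l matrix_mul_assoc r1 r2)
qed

lemma TR_inv2:
  assumes G: "invertible (G::real^'n^'n)" and c: "c \<noteq> 0"
  shows "TR (matrix_inv G) (- (matrix_inv G *v b)) (1 / c) (TR G b c \<sigma>) = \<sigma>"
proof
  fix x
  define H where "H = matrix_inv (transpose G)"
  have GT: "invertible (transpose G)" by (rule invertible_transpose'[OF G])
  have e1: "G *v (matrix_inv G *v x + - (matrix_inv G *v b)) + b = x"
    by (simp add: matrix_vector_right_distrib matrix_vector_mult_diff_distrib minv_vec2[OF G])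
  have e2: "transpose (matrix_inv G) = H" by (simp add: H_def minv_transpose[OF G])
  have e3: "matrix_inv H = transpose G" by (simp add: H_def minv_minv[OF GT])
  have r1: "H ** transpose G = mat 1" by (simp add: H_def minv[OF GT])
  have r2: "Y ** H ** transpose G = Y" for Y :: "real^'n^'n"
    by (simp add: matrix_mul_assoc[symmetric] r1)
  show "TR (matrix_inv G) (- (matrix_inv G *v b)) (1 / c) (TR G b c \<sigma>) x = \<sigma> x"
    unfolding TR_def e1 e2 e3 H_def[symmetric]
    using c by (simp add: mm_scale_r mm_scale_l matrix_mul_assoc r1 r2)
qed

theorem lemma5p7:
  fixes FT :: "real^'n^'n" and bT :: "real^'n" and \<sigma> :: "real^'n \<Rightarrow> real^'n^'n" and k :: nat
  assumes dim: "CARD('n) = 2 \<or> CARD('n) = 3"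
    and nondeg: "invertible FT"
    and k: "k \<ge> 1"
    and unisolvent_ref: "\<And>\<rho>. admissible (ref_simplex :: (real^'n) set) \<rho> \<Longrightarrow>
          \<exists>!\<tau>. \<tau> \<in> Sigma k ref_simplex \<and> dofs_vanish k ref_simplex (mat 1) 0 (\<lambda>x. \<rho> x - \<tau> x)"
    and sigma: "admissible (aff_map FT bT ` ref_simplex) \<sigma>"
  shows "Minv FT bT (interp k (aff_map FT bT ` ref_simplex) FT bT \<sigma>)
       = interp k ref_simplex (mat 1) 0 (Minv FT bT \<sigma>)"
proof -
  define d where "d = det FT"
  have d: "d \<noteq> 0" using nondeg by (simp add: d_def invertible_det_nz)
  have d': "1 / d \<noteq> 0" using d by simp
  have ok: "cov_ok TYPE('n)" using dim by (rule cov_ok_dim)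
  define Gi where "Gi = matrix_inv FT"
  define bi where "bi = - (matrix_inv FT *v bT)"
  have Gi: "invertible Gi" by (simp add: Gi_def invertible_minv[OF nondeg])
  have Minv_TR: "Minv FT bT = TR FT bT d" by (simp add: fun_eq_iff Minv_def TR_def aff_map_def d_def)
  define T where "T = (\<lambda>x. FT *v x + bT) ` (ref_simplex :: (real^'n) set)"
  have Teq: "aff_map FT bT ` ref_simplex = T" by (simp add: T_def aff_map_def[abs_def])
  have Tback: "(\<lambda>x. Gi *v x + bi) ` T = ref_simplex"
  proof -
    have "Gi *v (FT *v x + bT) + bi = x" for x
      by (simp add: Gi_def bi_def matrix_vector_right_distrib minv_vec1[OF nondeg])
    then show ?thesis by (simp add: T_def image_image)
  qed
  note rc = ref_simplex_compact ref_simplex_convex ref_simplex_aff_dim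
  have Tc: "compact T" unfolding T_def by (rule compact_affine_image[OF rc(1)])
  have Tv: "convex T" unfolding T_def by (rule convex_affine_image[OF rc(2)])
  have Ta: "aff_dim T = int CARD('n)" unfolding T_def by (simp add: aff_dim_affine_image[OF nondeg] rc(3))
  have sigT: "admissible T \<sigma>" using sigma Teq by simp
  define \<sigma>h where "\<sigma>h = TR FT bT d \<sigma>"
  have adm: "admissible ref_simplex \<sigma>h"
    unfolding \<sigma>h_def by (rule admissible_transfer[OF ok nondeg rc(3)]) (use sigT in \<open>simp add: T_def\<close>)
  obtain \<tau>h where \<tau>h: "\<tau>h \<in> Sigma k ref_simplex" "dofs_vanish k ref_simplex (mat 1) 0 (\<lambda>x. \<sigma>h x - \<tau>h x)"
    and uniq: "\<And>\<tau>. \<tau> \<in> Sigma k ref_simplex \<Longrightarrow> dofs_vanish k ref_simplex (mat 1) 0 (\<lambda>x. \<sigma>h x - \<tau> x) \<Longrightarrow> \<tau> = \<tau>h"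
    using unisolvent_ref[OF adm] by blast
  have RHS: "interp k ref_simplex (mat 1) 0 \<sigma>h = \<tau>h"
    unfolding interp_def
  proof (rule the_equality)
    show "\<tau>h \<in> Sigma k ref_simplex \<and> dofs_vanish k ref_simplex (mat 1) 0 (\<lambda>x. \<sigma>h x - \<tau>h x)"
      using \<tau>h by blast
    fix \<tau> assume "\<tau> \<in> Sigma k ref_simplex \<and> dofs_vanish k ref_simplex (mat 1) 0 (\<lambda>x. \<sigma>h x - \<tau> x)"
    then show "\<tau> = \<tau>h" using uniq by blast
  qed
  define \<tau>s where "\<tau>s = TR Gi bi (1 / d) \<tau>h"
  have inv1: "TR FT bT d (TR Gi bi (1 / d) \<tau>) = \<tau>" for \<tau>
    unfolding Gi_def bi_def by (rule TR_inv1[OF nondeg d])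
  have inv2: "TR Gi bi (1 / d) (TR FT bT d \<tau>) = \<tau>" for \<tau>
    unfolding Gi_def bi_def by (rule TR_inv2[OF nondeg d])
  have \<tau>sS: "\<tau>s \<in> Sigma k T"
    unfolding \<tau>s_def by (rule Sigma_transfer[OF Gi Ta]) (simp add: Tback \<tau>h(1))
  have \<tau>sD: "dofs_vanish k T FT bT (\<lambda>x. \<sigma> x - \<tau>s x)"
  proof -
    have "dofs_vanish k T FT bT (TR Gi bi (1 / d) (\<lambda>x. \<sigma>h x - \<tau>h x))"
    proof (rule dofs_transfer[OF ok Gi d' Tc Tv Ta])
      show "mat 1 = Gi ** FT" by (simp add: Gi_def minv[OF nondeg])
      show "invertible FT" by (rule nondeg)
      show "bT = matrix_inv Gi *v (0 - bi)"
        by (simp add: Gi_def bi_def minv_minv[OF nondeg] minv_vec2[OF nondeg])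
      show "admissible ((\<lambda>x. Gi *v x + bi) ` T) (\<lambda>x. \<sigma>h x - \<tau>h x)"
        unfolding Tback
        by (rule admissible_diff_poly[OF rc(1) rc(2) adm, where k=k]) (use \<tau>h(1) in \<open>simp add: Sigma_def\<close>)
      show "dofs_vanish k ((\<lambda>x. Gi *v x + bi) ` T) (mat 1) 0 (\<lambda>x. \<sigma>h x - \<tau>h x)"
        unfolding Tback by (rule \<tau>h(2))
    qed
    then show ?thesis by (simp add: TR_diff \<sigma>h_def inv2 \<tau>s_def)
  qed
  have uniqT: "\<tau> = \<tau>s" if \<tau>: "\<tau> \<in> Sigma k T" "dofs_vanish k T FT bT (\<lambda>x. \<sigma> x - \<tau> x)" for \<tau>
  proof -
    have S1: "TR FT bT d \<tau> \<in> Sigma k ref_simplex"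
      by (rule Sigma_transfer[OF nondeg rc(3)]) (use \<tau>(1) in \<open>simp add: T_def\<close>)
    have admT: "admissible T (\<lambda>x. \<sigma> x - \<tau> x)"
      by (rule admissible_diff_poly[OF Tc Tv sigT, where k=k]) (use \<tau>(1) in \<open>simp add: Sigma_def\<close>)
    have "dofs_vanish k ref_simplex (mat 1) 0 (TR FT bT d (\<lambda>x. \<sigma> x - \<tau> x))"
    proof (rule dofs_transfer[OF ok nondeg d rc(1) rc(2) rc(3)])
      show "FT = FT ** mat 1" by simp
      show "invertible (mat 1 :: real^'n^'n)" by (rule invertible_mat1)
      show "(0::real^'n) = matrix_inv FT *v (bT - bT)" by simp
      show "admissible ((\<lambda>x. FT *v x + bT) ` ref_simplex) (\<lambda>x. \<sigma> x - \<tau> x)"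
        using admT by (simp add: T_def)
      show "dofs_vanish k ((\<lambda>x. FT *v x + bT) ` ref_simplex) FT bT (\<lambda>x. \<sigma> x - \<tau> x)"
        using \<tau>(2) by (simp add: T_def)
    qed
    then have "dofs_vanish k ref_simplex (mat 1) 0 (\<lambda>x. \<sigma>h x - TR FT bT d \<tau> x)"
      by (simp add: TR_diff \<sigma>h_def)
    then have "TR FT bT d \<tau> = \<tau>h" using uniq S1 by blast
    then have "TR Gi bi (1 / d) (TR FT bT d \<tau>) = \<tau>s" by (simp add: \<tau>s_def)
    then show ?thesis by (simp add: inv2)
  qed
  have LHS: "interp k T FT bT \<sigma> = \<tau>s"
    unfolding interp_def
  proof (rule the_equality)
    show "\<tau>s \<in> Sigma k T \<and> dofs_vanish k T FT bT (\<lambda>x. \<sigma> x - \<tau>s x)"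
      using \<tau>sS \<tau>sD by blast
    fix \<tau> assume "\<tau> \<in> Sigma k T \<and> dofs_vanish k T FT bT (\<lambda>x. \<sigma> x - \<tau> x)"
    then show "\<tau> = \<tau>s" using uniqT by blast
  qed
  show ?thesis
    unfolding Teq Minv_TR LHS \<sigma>h_def[symmetric] RHS
    by (simp add: \<tau>s_def inv1)
qed

end
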